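(* For every $n\in\mathbb N$, $C(S^1)_{(n)}\simeq\left(C(S^1)^{(n)}\right)^d$, i.e. there is a unital complete order isomorphism between these operator systems.
   Context: $C(S^1)_{(n)}$: operator system of continuous functions $f$ on the unit circle with Fourier coefficients $\hat f(k)=0$ for $|k|\ge n$; $F\in M_p(C(S^1)_{(n)})$ positive iff $F(z)$ positive semidefinite for every $z\in S^1$; order unit the constant $1$. $C(S^1)^{(n)}$: operator subsystem of $M_n(\mathbb C)$ of Toeplitz matrices $[\tau_{k-\ell}]_{k,\ell=0}^{n-1}$. For a finite-dimensional operator system $\mathcal R$, $\mathcal R^d$ is its dual with matrix ordering: $[\varphi_{ij}]$ positive iff $r\mapsto[\varphi_{ij}(r)]$ is completely positive $\mathcal R\to M_p(\mathbb C)$; $\left(C(S^1)^{(n)}\right)^d$ is given as order unit the faithful state $[\tau_{k-\ell}]\mapsto\tau_0$. A unital complete order isomorphism is a unit-preserving linear bijection which, with its inverse, is completely positive. *)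

theory Defs
  imports "HOL-Analysis.Analysis"
begin

text \<open>A p x p matrix over a space V is modelled as nat => nat => V, only entries with
indices below p being relevant.  A complex number is nonnegative if it is real and >= 0.\<close>

definition cnonneg :: "complex \<Rightarrow> bool" where
  "cnonneg s \<longleftrightarrow> Im s = 0 \<and> 0 \<le> Re s"

definition psd :: "nat \<Rightarrow> (nat \<Rightarrow> nat \<Rightarrow> complex) \<Rightarrow> bool" where
  "psd p M \<longleftrightarrow> (\<forall>v::nat \<Rightarrow> complex.
      cnonneg (\<Sum>i<p. \<Sum>j<p. cnj (v i) * M i j * v j))"

text \<open>Positive semidefiniteness of a p x p block matrix with q x q blocks,
  i.e. of the corresponding (pq) x (pq) matrix (entry ((i,k),(j,l)) is B i j k l).\<close>
definition block_psd :: "nat \<Rightarrow> nat \<Rightarrow> (nat \<Rightarrow> nat \<Rightarrow> nat \<Rightarrow> nat \<Rightarrow> complex) \<Rightarrow> bool" where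
  "block_psd p q B \<longleftrightarrow> (\<forall>v::nat \<Rightarrow> nat \<Rightarrow> complex.
      cnonneg (\<Sum>i<p. \<Sum>j<p. \<Sum>k<q. \<Sum>l<q. cnj (v i k) * B i j k l * v j l))"

text \<open>Elements of C(S^1) are functions on the complex plane, continuous on the unit circle
  and (for extensionality) zero off the circle.\<close>

definition fourier_coeff :: "(complex \<Rightarrow> complex) \<Rightarrow> int \<Rightarrow> complex" where
  "fourier_coeff f k = integral {0..2*pi} (\<lambda>t. f (cis t) * cis (- (of_int k * t))) / (2 * pi)"

definition CS1_low :: "nat \<Rightarrow> (complex \<Rightarrow> complex) set" where
  "CS1_low n = {f. continuous_on (sphere 0 1) f \<and> (\<forall>z. z \<notin> sphere 0 1 \<longrightarrow> f z = 0)
                 \<and> (\<forall>k::int. \<bar>k\<bar> \<ge> int n \<longrightarrow> fourier_coeff f k = 0)}"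

definition CS1_low_pos :: "nat \<Rightarrow> (nat \<Rightarrow> nat \<Rightarrow> (complex \<Rightarrow> complex)) \<Rightarrow> bool" where
  "CS1_low_pos p F \<longleftrightarrow> (\<forall>z\<in>sphere 0 1. psd p (\<lambda>i j. F i j z))"

definition CS1_unit :: "complex \<Rightarrow> complex" where
  "CS1_unit z = (if z \<in> sphere 0 1 then 1 else 0)"

definition toeplitz :: "nat \<Rightarrow> (nat \<Rightarrow> nat \<Rightarrow> complex) set" where
  "toeplitz n = {T. \<exists>\<tau>::int \<Rightarrow> complex.
      \<forall>k l. T k l = (if k < n \<and> l < n then \<tau> (int k - int l) else 0)}"

definition toeplitz_pos :: "nat \<Rightarrow> nat \<Rightarrow> (nat \<Rightarrow> nat \<Rightarrow> (nat \<Rightarrow> nat \<Rightarrow> complex)) \<Rightarrow> bool" where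
  "toeplitz_pos n p R \<longleftrightarrow> block_psd p n (\<lambda>i j k l. R i j k l)"

definition toeplitz_dual :: "nat \<Rightarrow> ((nat \<Rightarrow> nat \<Rightarrow> complex) \<Rightarrow> complex) set" where
  "toeplitz_dual n = {\<phi>.
      (\<forall>x\<in>toeplitz n. \<forall>y\<in>toeplitz n. \<phi> (\<lambda>k l. x k l + y k l) = \<phi> x + \<phi> y)
    \<and> (\<forall>c. \<forall>x\<in>toeplitz n. \<phi> (\<lambda>k l. c * x k l) = c * \<phi> x)
    \<and> (\<forall>x. x \<notin> toeplitz n \<longrightarrow> \<phi> x = 0)}"

text \<open>[phi_ij] is positive iff r |-> [phi_ij(r)] is completely positive from the Toeplitz
  operator system to M_p.\<close>
definition toeplitz_dual_pos ::
  "nat \<Rightarrow> nat \<Rightarrow> (nat \<Rightarrow> nat \<Rightarrow> ((nat \<Rightarrow> nat \<Rightarrow> complex) \<Rightarrow> complex)) \<Rightarrow> bool" where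
  "toeplitz_dual_pos n p \<Phi> \<longleftrightarrow> (\<forall>q R. (\<forall>a<q. \<forall>b<q. R a b \<in> toeplitz n) \<longrightarrow>
      toeplitz_pos n q R \<longrightarrow> block_psd q p (\<lambda>a b i j. \<Phi> i j (R a b)))"

text \<open>Order unit of the dual: the faithful state [tau_(k-l)] |-> tau_0.\<close>
definition toeplitz_dual_unit :: "nat \<Rightarrow> (nat \<Rightarrow> nat \<Rightarrow> complex) \<Rightarrow> complex" where
  "toeplitz_dual_unit n T = (if T \<in> toeplitz n then T 0 0 else 0)"

end

theory Submission
  imports Defs
begin


definition qf :: "nat \<Rightarrow> (nat \<Rightarrow> nat \<Rightarrow> complex) \<Rightarrow> (nat \<Rightarrow> complex) \<Rightarrow> complex" where
  "qf P M v = (\<Sum>i<P. \<Sum>j<P. cnj (v i) * M i j * v j)"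

lemma psd_qf: "psd P M \<longleftrightarrow> (\<forall>v. cnonneg (qf P M v))"
  by (simp add: psd_def qf_def)

lemma cnonneg_add: "cnonneg a \<Longrightarrow> cnonneg b \<Longrightarrow> cnonneg (a + b)"
  by (simp add: cnonneg_def)

lemma cnonneg_sum: "(\<And>i. i \<in> A \<Longrightarrow> cnonneg (f i)) \<Longrightarrow> cnonneg (sum f A)"
proof (induction A rule: infinite_finite_induct)
  case (infinite A) then show ?case by (simp add: cnonneg_def)
next
  case empty then show ?case by (simp add: cnonneg_def)
next
  case (insert x F) then show ?case by (simp add: cnonneg_add)
qed

lemma cnonneg_scale: "cnonneg a \<Longrightarrow> 0 \<le> r \<Longrightarrow> cnonneg (of_real r * a)"
  by (simp add: cnonneg_def)

lemma cnonneg_normsq: "cnonneg (cnj z * z)"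
  by (simp add: cnonneg_def)

lemma cnonneg_normsq': "cnonneg (z * cnj z)"
  by (simp add: cnonneg_def)

lemma qf_two:
  assumes "i < P" "j < P" "i \<noteq> j"
  shows "qf P M (\<lambda>k. if k = i then a else if k = j then b else 0) =
     cnj a * M i i * a + cnj a * M i j * b + cnj b * M j i * a + cnj b * M j j * b"
proof -
  let ?v = "\<lambda>k. if k = i then a else if k = j then b else 0"
  have s: "\<And>f :: nat \<Rightarrow> complex. (\<And>k. k \<noteq> i \<Longrightarrow> k \<noteq> j \<Longrightarrow> f k = 0) \<Longrightarrow> (\<Sum>k<P. f k) = f i + f j"
  proof -
    fix f :: "nat \<Rightarrow> complex" assume h: "\<And>k. k \<noteq> i \<Longrightarrow> k \<noteq> j \<Longrightarrow> f k = 0"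
    have "(\<Sum>k<P. f k) = (\<Sum>k\<in>{i,j}. f k)"
      by (rule sum.mono_neutral_right) (use assms h in auto)
    then show "(\<Sum>k<P. f k) = f i + f j" using assms by simp
  qed
  have "qf P M ?v = (\<Sum>k<P. cnj (?v k) * (\<Sum>l<P. M k l * ?v l))"
    unfolding qf_def by (simp add: sum_distrib_left mult.assoc)
  also have "\<dots> = cnj (?v i) * (\<Sum>l<P. M i l * ?v l) + cnj (?v j) * (\<Sum>l<P. M j l * ?v l)"
    by (rule s) auto
  also have "(\<Sum>l<P. M i l * ?v l) = M i i * ?v i + M i j * ?v j" by (rule s) auto
  also have "(\<Sum>l<P. M j l * ?v l) = M j i * ?v i + M j j * ?v j" by (rule s) auto
  finally show ?thesis using assms by (simp add: algebra_simps)
qed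

lemma qf_one:
  assumes "i < P"
  shows "qf P M (\<lambda>k. if k = i then a else 0) = cnj a * M i i * a"
proof -
  have "qf P M (\<lambda>k. if k = i then a else 0) = (\<Sum>k<P. if k = i then cnj a * (\<Sum>l<P. if l = i then M k l * a else 0) else 0)"
    unfolding qf_def by (intro sum.cong refl) (auto simp: sum_distrib_left if_distrib cong: if_cong)
  also have "\<dots> = cnj a * M i i * a" using assms by (simp add: sum.delta)
  finally show ?thesis .
qed

lemma psd_diag: "psd P M \<Longrightarrow> i < P \<Longrightarrow> cnonneg (M i i)"
  using qf_one[of i P M 1] by (simp add: psd_qf) (metis)

lemma psd_herm:
  assumes "psd P M" "i < P" "j < P"
  shows "M j i = cnj (M i j)"
proof (cases "i = j")
  case True
  then show ?thesis using psd_diag[OF assms(1) assms(2)] by (simp add: cnonneg_def complex_eq_iff)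
next
  case False
  have di: "Im (M i i) = 0" and dj: "Im (M j j) = 0"
    using psd_diag[OF assms(1)] assms by (auto simp: cnonneg_def)
  have h1: "cnonneg (qf P M (\<lambda>k. if k = i then 1 else if k = j then 1 else 0))"
    using assms by (simp add: psd_qf)
  have h2: "cnonneg (qf P M (\<lambda>k. if k = i then 1 else if k = j then \<i> else 0))"
    using assms by (simp add: psd_qf)
  from h1 have a: "Im (M i j) + Im (M j i) = 0"
    unfolding qf_two[OF assms(2,3) False] using di dj by (simp add: cnonneg_def)
  from h2 have b: "Re (M i j) - Re (M j i) = 0"
    unfolding qf_two[OF assms(2,3) False] using di dj by (simp add: cnonneg_def)
  show ?thesis using a b by (simp add: complex_eq_iff)
qed


lemma psd_zero_row:
  assumes "psd P M" "s < P" "j < P" "M s s = 0"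
  shows "M s j = 0"
proof (rule ccontr)
  assume nz: "M s j \<noteq> 0"
  then have "s \<noteq> j" using assms by auto
  let ?x = "M s j"
  have hj: "M j s = cnj ?x" using psd_herm[OF assms(1,2,3)] .
  have dj: "cnonneg (M j j)" using psd_diag[OF assms(1,3)] .
  define r where "r = (Re (M j j) + 1) / (2 * (cmod ?x)^2)"
  have xpos: "(cmod ?x)^2 > 0" using nz by simp
  have "cnonneg (qf P M (\<lambda>k. if k = s then - (of_real r * ?x) else if k = j then 1 else 0))"
    using assms by (simp add: psd_qf)
  then have "cnonneg (M j j - 2 * of_real r * (cnj ?x * ?x))"
    unfolding qf_two[OF assms(2,3) \<open>s \<noteq> j\<close>] using assms(4) hj by (simp add: algebra_simps)
  moreover have "cnj ?x * ?x = of_real ((cmod ?x)^2)" using complex_norm_square[of ?x] by (simp add: mult.commute)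
  ultimately have "0 \<le> Re (M j j) - 2 * r * (cmod ?x)^2"
    by (simp add: cnonneg_def)
  moreover have "2 * r * (cmod ?x)^2 = Re (M j j) + 1" unfolding r_def using xpos by simp
  ultimately show False by simp
qed

lemma qf_add_vec:
  "qf P M (\<lambda>k. v k + w k) = qf P M v + (\<Sum>i<P. \<Sum>j<P. cnj (v i) * M i j * w j)
     + (\<Sum>i<P. \<Sum>j<P. cnj (w i) * M i j * v j) + qf P M w"
  unfolding qf_def by (simp add: algebra_simps sum.distrib)

lemma qf_update:
  assumes "s < P"
  shows "qf P M (v(s := v s + t)) = qf P M v + cnj t * (\<Sum>j<P. M s j * v j)
     + t * (\<Sum>i<P. cnj (v i) * M i s) + cnj t * t * M s s"
proof -
  have e: "v(s := v s + t) = (\<lambda>k. v k + (if k = s then t else 0))" by auto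
  have 1: "(\<Sum>i<P. \<Sum>j<P. cnj (v i) * M i j * (if j = s then t else 0)) = t * (\<Sum>i<P. cnj (v i) * M i s)"
    using assms by (simp add: if_distrib sum.delta sum_distrib_left mult_ac cong: if_cong)
  have 2: "(\<Sum>i<P. \<Sum>j<P. cnj (if i = s then t else 0) * M i j * v j) = cnj t * (\<Sum>j<P. M s j * v j)"
  proof -
    have "\<And>i. (\<Sum>j<P. cnj (if i = s then t else 0) * M i j * v j) = (if i = s then cnj t * (\<Sum>j<P. M s j * v j) else 0)"
      by (simp add: sum_distrib_left mult_ac)
    then show ?thesis using assms by (simp add: sum.delta)
  qed
  have 3: "qf P M (\<lambda>k. if k = s then t else 0) = cnj t * M s s * t" by (rule qf_one[OF assms])
  show ?thesis unfolding e qf_add_vec 1 2 3 by (simp add: mult_ac)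
qed


lemma chol_step:
  fixes B :: "nat \<Rightarrow> nat \<Rightarrow> bool"
  assumes Bsym: "\<And>i j. B i j \<Longrightarrow> B j i"
    and Bclos: "\<And>c i j. c \<le> i \<Longrightarrow> c \<le> j \<Longrightarrow> B c i \<Longrightarrow> B c j \<Longrightarrow> B i j"
  shows "psd P M \<Longrightarrow> (\<forall>i j. i < P \<longrightarrow> j < P \<longrightarrow> M i j \<noteq> 0 \<longrightarrow> B i j)
    \<Longrightarrow> (\<forall>i j. i < P \<longrightarrow> j < P \<longrightarrow> (i < s \<or> j < s) \<longrightarrow> M i j = 0) \<Longrightarrow> s \<le> P
    \<Longrightarrow> \<exists>x. (\<forall>i<P. \<forall>j<P. M i j = (\<Sum>c\<in>{s..<P}. x c i * cnj (x c j)))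
          \<and> (\<forall>c i. x c i \<noteq> 0 \<longrightarrow> c \<le> i \<and> i < P \<and> B c i)"
proof (induction "P - s" arbitrary: s M)
  case 0
  then have "s = P" by simp
  then show ?case using "0.prems"(3) by (intro exI[of _ "\<lambda>c i. 0"]) auto
next
  case (Suc k)
  then have sP: "s < P" and k: "k = P - Suc s" by auto
  note psdM = Suc.prems(1) and band = Suc.prems(2) and zer = Suc.prems(3)
  show ?case
  proof (cases "M s s = 0")
    case True
    have row: "\<And>j. j < P \<Longrightarrow> M s j = 0" using psd_zero_row[OF psdM sP _ True] by blast
    have col: "\<And>j. j < P \<Longrightarrow> M j s = 0" using row psd_herm[OF psdM sP] by auto
    have zer': "\<forall>i j. i < P \<longrightarrow> j < P \<longrightarrow> (i < Suc s \<or> j < Suc s) \<longrightarrow> M i j = 0"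
      using zer row col by (metis less_Suc_eq)
    obtain x where x1: "\<forall>i<P. \<forall>j<P. M i j = (\<Sum>c\<in>{Suc s..<P}. x c i * cnj (x c j))"
      and x2: "\<forall>c i. x c i \<noteq> 0 \<longrightarrow> c \<le> i \<and> i < P \<and> B c i"
      using Suc.hyps(1)[OF k psdM band zer'] sP by auto
    define x' where "x' = x(s := (\<lambda>i. 0))"
    have "\<forall>i<P. \<forall>j<P. M i j = (\<Sum>c\<in>{s..<P}. x' c i * cnj (x' c j))"
    proof (intro allI impI)
      fix i j assume "i < P" "j < P"
      have "{s..<P} = insert s {Suc s..<P}" using sP by auto
      then have "(\<Sum>c\<in>{s..<P}. x' c i * cnj (x' c j)) = (\<Sum>c\<in>{Suc s..<P}. x' c i * cnj (x' c j))"
        by (simp add: x'_def)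
      also have "\<dots> = (\<Sum>c\<in>{Suc s..<P}. x c i * cnj (x c j))"
        by (intro sum.cong) (auto simp: x'_def)
      finally show "M i j = (\<Sum>c\<in>{s..<P}. x' c i * cnj (x' c j))" using x1 \<open>i < P\<close> \<open>j < P\<close> by simp
    qed
    moreover have "\<forall>c i. x' c i \<noteq> 0 \<longrightarrow> c \<le> i \<and> i < P \<and> B c i" using x2 by (simp add: x'_def)
    ultimately show ?thesis by blast
  next
    case False
    define d where "d = Re (M s s)"
    have dM: "M s s = of_real d" using psd_diag[OF psdM sP] by (simp add: d_def cnonneg_def complex_eq_iff)
    have dpos: "d > 0"
    proof -
      have "cnonneg (of_real d)" using psd_diag[OF psdM sP] dM by simp
      then have "d \<ge> 0" by (simp add: cnonneg_def)
      moreover have "d \<noteq> 0" using False dM by auto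
      ultimately show ?thesis by simp
    qed
    define r where "r = sqrt d"
    have rpos: "r > 0" using dpos by (simp add: r_def)
    have rr: "r * r = d" using dpos by (simp add: r_def)
    have rrc: "(of_real r :: complex) * of_real r = of_real d" using rr by (metis of_real_mult)
    define y where "y i = (if i < P then M i s / of_real r else 0)" for i
    define M' where "M' i j = M i j - y i * cnj (y j)" for i j
    have herm: "\<And>i j. i < P \<Longrightarrow> j < P \<Longrightarrow> M j i = cnj (M i j)" using psd_herm[OF psdM] by blast
    have ys: "y i = 0" if "i < s" for i using zer that sP by (simp add: y_def)
    have psdM': "psd P M'"
    proof (unfold psd_qf, intro allI)
      fix v :: "nat \<Rightarrow> complex"
      define \<beta> where "\<beta> = (\<Sum>j<P. M s j * v j)"
      define t where "t = - \<beta> / of_real d"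
      have cb: "(\<Sum>i<P. cnj (v i) * M i s) = cnj \<beta>"
      proof -
        have "(\<Sum>i<P. cnj (v i) * M i s) = (\<Sum>i<P. cnj (M s i * v i))"
          by (intro sum.cong refl) (simp add: herm[OF sP] mult.commute)
        then show ?thesis unfolding \<beta>_def by simp
      qed
      have g1: "(\<Sum>j<P. cnj (y j) * v j) = \<beta> / of_real r"
      proof -
        have "(\<Sum>j<P. cnj (y j) * v j) = (\<Sum>j<P. M s j * v j / of_real r)"
          by (intro sum.cong refl) (simp add: y_def herm[OF _ sP])
        then show ?thesis unfolding \<beta>_def by (simp add: sum_divide_distrib)
      qed
      have g2: "(\<Sum>i<P. cnj (v i) * y i) = cnj \<beta> / of_real r"
        unfolding cb[symmetric] by (auto simp: y_def sum_divide_distrib intro!: sum.cong)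
      have "qf P M' v = qf P M v - (\<Sum>i<P. \<Sum>j<P. cnj (v i) * y i * (cnj (y j) * v j))"
        unfolding qf_def M'_def by (simp add: algebra_simps sum_subtractf)
      also have "(\<Sum>i<P. \<Sum>j<P. cnj (v i) * y i * (cnj (y j) * v j)) = (\<Sum>i<P. cnj (v i) * y i) * (\<Sum>j<P. cnj (y j) * v j)"
        by (simp add: sum_product)
      also have "\<dots> = cnj \<beta> * \<beta> / of_real d" unfolding g1 g2 using rrc by (simp add: field_simps)
      finally have e1: "qf P M' v = qf P M v - cnj \<beta> * \<beta> / of_real d" .
      have e2: "qf P M (v(s := v s + t)) = qf P M v - cnj \<beta> * \<beta> / of_real d"
        unfolding qf_update[OF sP] cb \<beta>_def[symmetric] dM t_def using dpos
        by (simp add: field_simps)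
      show "cnonneg (qf P M' v)" using e1 e2 psdM by (metis psd_qf)
    qed
    have band': "\<forall>i j. i < P \<longrightarrow> j < P \<longrightarrow> M' i j \<noteq> 0 \<longrightarrow> B i j"
    proof (intro allI impI)
      fix i j assume ij: "i < P" "j < P" "M' i j \<noteq> 0"
      show "B i j"
      proof (cases "M i j = 0")
        case True
        then have "y i \<noteq> 0" "y j \<noteq> 0" using ij by (auto simp: M'_def)
        then have a: "M i s \<noteq> 0" "M j s \<noteq> 0" by (auto simp: y_def split: if_splits)
        then have "B i s" "B j s" using band ij sP by auto
        moreover have "s \<le> i" using a(1) zer ij sP by (meson not_le)
        moreover have "s \<le> j" using a(2) zer ij sP by (meson not_le)
        ultimately show ?thesis using Bsym Bclos by blast
      qed (use band ij in auto)
    qed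
    have zer': "\<forall>i j. i < P \<longrightarrow> j < P \<longrightarrow> (i < Suc s \<or> j < Suc s) \<longrightarrow> M' i j = 0"
    proof (intro allI impI)
      fix i j assume ij: "i < P" "j < P" "i < Suc s \<or> j < Suc s"
      show "M' i j = 0"
      proof (cases "i < s \<or> j < s")
        case True
        then show ?thesis using zer ij ys by (auto simp: M'_def)
      next
        case False
        then have "i = s \<or> j = s" using ij by auto
        then show ?thesis
        proof
          assume "i = s"
          then show ?thesis using ij sP rrc rpos dpos herm[of j s] dM
            by (simp add: M'_def y_def field_simps)
        next
          assume "j = s"
          then show ?thesis using ij sP rrc rpos dpos dM
            by (simp add: M'_def y_def field_simps)
        qed
      qed
    qed
    obtain x where x1: "\<forall>i<P. \<forall>j<P. M' i j = (\<Sum>c\<in>{Suc s..<P}. x c i * cnj (x c j))"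
      and x2: "\<forall>c i. x c i \<noteq> 0 \<longrightarrow> c \<le> i \<and> i < P \<and> B c i"
      using Suc.hyps(1)[OF k psdM' band' zer'] sP by auto
    define x' where "x' = x(s := y)"
    have "\<forall>i<P. \<forall>j<P. M i j = (\<Sum>c\<in>{s..<P}. x' c i * cnj (x' c j))"
    proof (intro allI impI)
      fix i j assume "i < P" "j < P"
      have "{s..<P} = insert s {Suc s..<P}" using sP by auto
      then have "(\<Sum>c\<in>{s..<P}. x' c i * cnj (x' c j)) = y i * cnj (y j) + (\<Sum>c\<in>{Suc s..<P}. x' c i * cnj (x' c j))"
        by (simp add: x'_def)
      also have "(\<Sum>c\<in>{Suc s..<P}. x' c i * cnj (x' c j)) = (\<Sum>c\<in>{Suc s..<P}. x c i * cnj (x c j))"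
        by (intro sum.cong) (auto simp: x'_def)
      finally show "M i j = (\<Sum>c\<in>{s..<P}. x' c i * cnj (x' c j))" using x1 \<open>i < P\<close> \<open>j < P\<close>
        unfolding M'_def by (metis add_diff_cancel_left' diff_add_cancel)
    qed
    moreover have "\<forall>c i. x' c i \<noteq> 0 \<longrightarrow> c \<le> i \<and> i < P \<and> B c i"
    proof (intro allI impI)
      fix c i assume "x' c i \<noteq> 0"
      show "c \<le> i \<and> i < P \<and> B c i"
      proof (cases "c = s")
        case True
        then have yi: "y i \<noteq> 0" using \<open>x' c i \<noteq> 0\<close> by (simp add: x'_def)
        then have "i < P" "M i s \<noteq> 0" by (auto simp: y_def split: if_splits)
        then show ?thesis using True band zer sP Bsym by (meson not_le)
      qed (use x2 \<open>x' c i \<noteq> 0\<close> in \<open>auto simp: x'_def\<close>)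
    qed
    ultimately show ?thesis by blast
  qed
qed


lemma sum_split_add: fixes m q :: nat shows "(\<Sum>i<m+q. g i) = (\<Sum>i<m. g i) + (\<Sum>a<q. g (m+a))"
  by (induction q) (simp_all add: add.assoc)

lemma sum_flatten:
  fixes N q :: nat
  shows "(\<Sum>i<N*q. f (i div q) (i mod q)) = (\<Sum>k<N. \<Sum>a<q. f k a)"
proof (cases "q = 0")
  case True then show ?thesis by simp
next
  case False
  show ?thesis
  proof (induction N)
    case 0 then show ?case by simp
  next
    case (Suc N)
    have eq: "Suc N * q = N * q + q" by simp
    have "(\<Sum>i<Suc N*q. f (i div q) (i mod q)) = (\<Sum>i<N*q. f (i div q) (i mod q)) + (\<Sum>a<q. f ((N*q+a) div q) ((N*q+a) mod q))"
      unfolding eq by (rule sum_split_add)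
    also have "(\<Sum>a<q. f ((N*q+a) div q) ((N*q+a) mod q)) = (\<Sum>a<q. f N a)"
      using False by (intro sum.cong refl) simp
    finally show ?case using Suc by simp
  qed
qed

lemma sum_reorder4:
  "(\<Sum>k\<in>K. \<Sum>a\<in>A. \<Sum>l\<in>K. \<Sum>b\<in>A. f k a l b) = (\<Sum>a\<in>A. \<Sum>b\<in>A. \<Sum>k\<in>K. \<Sum>l\<in>K. f k a l b)"
proof -
  have "(\<Sum>k\<in>K. \<Sum>a\<in>A. \<Sum>l\<in>K. \<Sum>b\<in>A. f k a l b) = (\<Sum>k\<in>K. \<Sum>a\<in>A. \<Sum>b\<in>A. \<Sum>l\<in>K. f k a l b)"
    by (intro sum.cong refl) (rule sum.swap)
  also have "\<dots> = (\<Sum>a\<in>A. \<Sum>k\<in>K. \<Sum>b\<in>A. \<Sum>l\<in>K. f k a l b)" by (rule sum.swap)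
  also have "\<dots> = (\<Sum>a\<in>A. \<Sum>b\<in>A. \<Sum>k\<in>K. \<Sum>l\<in>K. f k a l b)"
    by (intro sum.cong refl) (rule sum.swap)
  finally show ?thesis .
qed

lemma sum_window:
  fixes h :: "nat \<Rightarrow> 'a::comm_monoid_add"
  assumes "\<And>i. h i \<noteq> 0 \<Longrightarrow> K \<le> i \<and> i < K + W \<and> i < L"
  shows "(\<Sum>i<L. h i) = (\<Sum>i<W. h (K + i))"
proof -
  have "(\<Sum>i<L. h i) = (\<Sum>i\<in>{..<L} \<inter> {K..<K+W}. h i)"
    by (rule sum.mono_neutral_right) (use assms in auto)
  also have "\<dots> = (\<Sum>i\<in>{K..<K+W}. h i)"
    by (rule sum.mono_neutral_left) (use assms in auto)
  also have "\<dots> = (\<Sum>i<W. h (K + i))"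
  proof -
    have "{K..<K+W} = (\<lambda>i. K + i) ` {..<W}"
    proof (intro equalityI subsetI)
      fix x assume "x \<in> {K..<K+W}"
      then show "x \<in> (\<lambda>i. K + i) ` {..<W}" by (intro image_eqI[of _ _ "x - K"]) auto
    qed auto
    then show ?thesis by (simp add: sum.reindex)
  qed
  finally show ?thesis .
qed

lemma cis_eq_1_imp:
  assumes "cis x = 1" shows "\<exists>m::int. x = 2 * pi * of_int m"
proof -
  have "exp (\<i> * complex_of_real x) = 1" using assms by (simp add: cis_conv_exp)
  then obtain m :: int where "Im (\<i> * complex_of_real x) = of_int (2 * m) * pi"
    by (auto simp: exp_eq_1)
  then show ?thesis by (intro exI[of _ m]) simp
qed

lemma root_sum:
  assumes "M > 0"
  shows "(\<Sum>s<M. cis (2 * pi * real s * of_int j / real M)) = (if int M dvd j then of_nat M else 0)"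
proof -
  define r where "r = cis (2 * pi * of_int j / real M)"
  have e: "cis (2 * pi * real s * of_int j / real M) = r ^ s" for s
  proof -
    have "r ^ s = cis (real s * (2 * pi * of_int j / real M))" unfolding r_def by (rule Complex.DeMoivre)
    moreover have "real s * (2 * pi * of_int j / real M) = 2 * pi * real s * of_int j / real M" by simp
    ultimately show ?thesis by metis
  qed
  show ?thesis
  proof (cases "int M dvd j")
    case True
    then obtain t where t: "j = int M * t" by blast
    have "cis (2 * pi * real s * of_int j / real M) = 1" for s
    proof -
      have "2 * pi * real s * of_int j / real M = 2 * pi * of_int (int s * t)"
        using assms by (simp add: t field_simps)
      then show ?thesis by simp
    qed
    then show ?thesis using True by simp
  next
    case False
    have r1: "r \<noteq> 1"
    proof
      assume "r = 1"
      then obtain m :: int where "2 * pi * of_int j / real M = 2 * pi * of_int m"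
        unfolding r_def using cis_eq_1_imp by blast
      then have "of_int j = real M * of_int m" using assms by (simp add: field_simps)
      then have "j = int M * m" by (metis of_int_eq_iff of_int_mult of_int_of_nat_eq)
      then show False using False by simp
    qed
    have rM: "r ^ M = 1"
    proof -
      have "r ^ M = cis (real M * (2 * pi * of_int j / real M))" unfolding r_def Complex.DeMoivre ..
      also have "\<dots> = cis (2 * pi * of_int j)" using assms by simp
      finally show ?thesis by simp
    qed
    have "(\<Sum>s<M. r ^ s) = 0" using r1 rM by (simp add: sum_gp_strict)
    then show ?thesis using False e by simp
  qed
qed


definition Iset :: "nat \<Rightarrow> int set" where "Iset n = {1 - int n..int n - 1}"

lemma finite_Iset [simp]: "finite (Iset n)" by (simp add: Iset_def)

lemma mem_Iset: "m \<in> Iset n \<longleftrightarrow> \<bar>m\<bar> < int n" by (auto simp: Iset_def)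

lemma sum2_flat:
  fixes N q :: nat
  shows "(\<Sum>i<N*q. \<Sum>j<N*q. F (i div q) (i mod q) (j div q) (j mod q)) =
    (\<Sum>k<N. \<Sum>a<q. \<Sum>l<N. \<Sum>b<q. F k a l b)"
proof -
  have inner: "\<And>k a. (\<Sum>j<N*q. F k a (j div q) (j mod q)) = (\<Sum>l<N. \<Sum>b<q. F k a l b)"
    by (rule sum_flatten)
  have "(\<Sum>i<N*q. \<Sum>j<N*q. F (i div q) (i mod q) (j div q) (j mod q)) =
     (\<Sum>i<N*q. (\<lambda>k a. \<Sum>l<N. \<Sum>b<q. F k a l b) (i div q) (i mod q))"
    by (rule sum.cong[OF refl]) (simp only: inner)
  also have "\<dots> = (\<Sum>k<N. \<Sum>a<q. \<Sum>l<N. \<Sum>b<q. F k a l b)"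
    by (rule sum_flatten)
  finally show ?thesis .
qed

lemma qf_flat:
  fixes N q :: nat
  shows "qf (N*q) (\<lambda>i j. F (i div q) (i mod q) (j div q) (j mod q)) v =
    (\<Sum>k<N. \<Sum>a<q. \<Sum>l<N. \<Sum>b<q. cnj (v (k*q+a)) * F k a l b * v (l*q+b))"
proof -
  have "qf (N*q) (\<lambda>i j. F (i div q) (i mod q) (j div q) (j mod q)) v =
     (\<Sum>i<N*q. \<Sum>j<N*q. (\<lambda>k a l b. cnj (v (k*q+a)) * F k a l b * v (l*q+b)) (i div q) (i mod q) (j div q) (j mod q))"
    unfolding qf_def by (simp add: div_mult_mod_eq)
  also have "\<dots> = (\<Sum>k<N. \<Sum>a<q. \<Sum>l<N. \<Sum>b<q. cnj (v (k*q+a)) * F k a l b * v (l*q+b))"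
    by (rule sum2_flat)
  finally show ?thesis .
qed

lemma block_to_flat:
  assumes "block_psd q n (\<lambda>a b k l. \<rho> a b (int k - int l))"
  shows "psd (n*q) (\<lambda>i j. \<rho> (i mod q) (j mod q) (int (i div q) - int (j div q)))"
  unfolding psd_qf
proof
  fix v :: "nat \<Rightarrow> complex"
  have "qf (n*q) (\<lambda>i j. \<rho> (i mod q) (j mod q) (int (i div q) - int (j div q))) v
     = (\<Sum>k<n. \<Sum>a<q. \<Sum>l<n. \<Sum>b<q. cnj (v (k*q+a)) * \<rho> a b (int k - int l) * v (l*q+b))"
    by (rule qf_flat)
  also have "\<dots> = (\<Sum>a<q. \<Sum>b<q. \<Sum>k<n. \<Sum>l<n. cnj (v (k*q+a)) * \<rho> a b (int k - int l) * v (l*q+b))"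
    by (rule sum_reorder4)
  finally show "cnonneg (qf (n*q) (\<lambda>i j. \<rho> (i mod q) (j mod q) (int (i div q) - int (j div q))) v)"
    using assms unfolding block_psd_def
    by (auto dest: spec[of _ "\<lambda>a k. v (k*q+a)"])
qed

lemma int_dvd_small:
  assumes "int M dvd x" "\<bar>x\<bar> < int M" shows "x = 0"
proof (rule ccontr)
  assume nz: "x \<noteq> 0"
  obtain c where c: "x = int M * c" using assms(1) by blast
  then have "c \<noteq> 0" using nz by auto
  then have "1 \<le> \<bar>c\<bar>" by linarith
  then have "int M * 1 \<le> int M * \<bar>c\<bar>" by (intro mult_left_mono) auto
  then show False using assms(2) c by (simp add: abs_mult)
qed


lemma sum_swap5:
  "(\<Sum>k\<in>K. \<Sum>a\<in>A. \<Sum>l\<in>L. \<Sum>b\<in>B. \<Sum>s\<in>S. f s k a l b) = (\<Sum>s\<in>S. \<Sum>k\<in>K. \<Sum>a\<in>A. \<Sum>l\<in>L. \<Sum>b\<in>B. f s k a l b)"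
proof -
  have "(\<Sum>k\<in>K. \<Sum>a\<in>A. \<Sum>l\<in>L. \<Sum>b\<in>B. \<Sum>s\<in>S. f s k a l b) = (\<Sum>k\<in>K. \<Sum>a\<in>A. \<Sum>l\<in>L. \<Sum>s\<in>S. \<Sum>b\<in>B. f s k a l b)"
    by (intro sum.cong refl) (rule sum.swap)
  also have "\<dots> = (\<Sum>k\<in>K. \<Sum>a\<in>A. \<Sum>s\<in>S. \<Sum>l\<in>L. \<Sum>b\<in>B. f s k a l b)"
    by (intro sum.cong refl) (rule sum.swap)
  also have "\<dots> = (\<Sum>k\<in>K. \<Sum>s\<in>S. \<Sum>a\<in>A. \<Sum>l\<in>L. \<Sum>b\<in>B. f s k a l b)"
    by (intro sum.cong refl) (rule sum.swap)
  also have "\<dots> = (\<Sum>s\<in>S. \<Sum>k\<in>K. \<Sum>a\<in>A. \<Sum>l\<in>L. \<Sum>b\<in>B. f s k a l b)"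
    by (rule sum.swap)
  finally show ?thesis .
qed

lemma prod3: fixes G :: complex shows "sum \<alpha> K * G * sum \<beta> L = (\<Sum>k\<in>K. \<Sum>l\<in>L. \<alpha> k * G * \<beta> l)"
  by (simp add: sum_distrib_left sum_distrib_right mult.assoc) (rule sum.swap)

lemma toep_psd:
  fixes g :: "nat \<Rightarrow> nat \<Rightarrow> int \<Rightarrow> complex" and N q n :: nat
  assumes G: "\<And>t. psd q (\<lambda>a b. \<Sum>m\<in>Iset n. g a b m * cis (of_int m * t))"
    and gz: "\<And>a b m. m \<notin> Iset n \<Longrightarrow> g a b m = 0"
  shows "psd (N*q) (\<lambda>i j. g (i mod q) (j mod q) (int (j div q) - int (i div q)))"
  unfolding psd_qf
proof
  fix v :: "nat \<Rightarrow> complex"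
  define M where "M = N + n + 1"
  define th where "th s = 2 * pi * real s / real M" for s :: nat
  define Gm where "Gm a b t = (\<Sum>m\<in>Iset n. g a b m * cis (of_int m * t))" for a b t
  define V where "V k a = v (k*q+a)" for k a
  define W where "W s b = (\<Sum>l<N. cis (- (th s * real l)) * V l b)" for s b
  define X where "X s k a l b = cnj (V k a) * Gm a b (th s) * cis (th s * (real k - real l)) * V l b" for s k a l b
  have Mpos: "M > 0" by (simp add: M_def)
  have avg: "g a b (int l - int k) = (1 / of_nat M) * (\<Sum>s<M. Gm a b (th s) * cis (th s * (real k - real l)))"
    if kl: "k < N" "l < N" for a b k l
  proof -
    have c1: "cis (of_int m * th s) * cis (th s * (real k - real l)) = cis (2 * pi * real s * of_int (m + int k - int l) / real M)"
      for s m
    proof -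
      have "of_int m * th s + th s * (real k - real l) = 2 * pi * real s * of_int (m + int k - int l) / real M"
        using Mpos by (simp add: th_def field_simps)
      then show ?thesis by (simp add: cis_mult)
    qed
    have "(\<Sum>s<M. Gm a b (th s) * cis (th s * (real k - real l)))
        = (\<Sum>s<M. \<Sum>m\<in>Iset n. g a b m * cis (2 * pi * real s * of_int (m + int k - int l) / real M))"
      unfolding Gm_def by (simp add: sum_distrib_right mult.assoc c1)
    also have "\<dots> = (\<Sum>m\<in>Iset n. g a b m * (\<Sum>s<M. cis (2 * pi * real s * of_int (m + int k - int l) / real M)))"
      by (simp add: sum_distrib_left sum.swap[of _ "{..<M}"])
    also have "\<dots> = (\<Sum>m\<in>Iset n. if m = int l - int k then g a b m * of_nat M else 0)"
    proof (intro sum.cong refl)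
      fix m assume m: "m \<in> Iset n"
      have sm: "\<bar>m + int k - int l\<bar> < int M" using m kl by (auto simp: mem_Iset M_def)
      have "int M dvd (m + int k - int l) \<longleftrightarrow> m = int l - int k"
        using int_dvd_small[OF _ sm] by auto
      then show "g a b m * (\<Sum>s<M. cis (2 * pi * real s * of_int (m + int k - int l) / real M)) =
          (if m = int l - int k then g a b m * of_nat M else 0)"
        unfolding root_sum[OF Mpos] by simp
    qed
    also have "\<dots> = g a b (int l - int k) * of_nat M"
      using gz[of "int l - int k" a b] by (simp add: sum.delta')
    finally show ?thesis using Mpos by simp
  qed
  have "qf (N*q) (\<lambda>i j. g (i mod q) (j mod q) (int (j div q) - int (i div q))) v
      = (\<Sum>k<N. \<Sum>a<q. \<Sum>l<N. \<Sum>b<q. cnj (V k a) * g a b (int l - int k) * V l b)"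
    unfolding V_def by (rule qf_flat)
  also have "\<dots> = (\<Sum>k<N. \<Sum>a<q. \<Sum>l<N. \<Sum>b<q. (1 / of_nat M) * (\<Sum>s<M. X s k a l b))"
  proof (intro sum.cong refl)
    fix k a l b assume "k \<in> {..<N}" "l \<in> {..<N}"
    then have "g a b (int l - int k) = (1 / of_nat M) * (\<Sum>s<M. Gm a b (th s) * cis (th s * (real k - real l)))"
      by (intro avg) auto
    then show "cnj (V k a) * g a b (int l - int k) * V l b = (1 / of_nat M) * (\<Sum>s<M. X s k a l b)"
      unfolding X_def by (simp add: sum_distrib_left sum_distrib_right mult_ac)
  qed
  also have "\<dots> = (1 / of_nat M) * (\<Sum>k<N. \<Sum>a<q. \<Sum>l<N. \<Sum>b<q. \<Sum>s<M. X s k a l b)"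
    by (simp add: sum_distrib_left)
  also have "\<dots> = (1 / of_nat M) * (\<Sum>s<M. \<Sum>k<N. \<Sum>a<q. \<Sum>l<N. \<Sum>b<q. X s k a l b)"
    by (subst sum_swap5) (rule refl)
  also have "\<dots> = (1 / of_nat M) * (\<Sum>s<M. \<Sum>a<q. \<Sum>b<q. \<Sum>k<N. \<Sum>l<N. X s k a l b)"
    by (subst sum_reorder4) (rule refl)
  also have "\<dots> = (1 / of_nat M) * (\<Sum>s<M. qf q (\<lambda>a b. Gm a b (th s)) (W s))"
  proof -
    have "(\<Sum>a<q. \<Sum>b<q. \<Sum>k<N. \<Sum>l<N. X s k a l b) = qf q (\<lambda>a b. Gm a b (th s)) (W s)" for s
    proof -
      have cw: "cnj (W s a) = (\<Sum>k<N. cis (th s * real k) * cnj (V k a))" for a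
        by (simp add: W_def cis_cnj)
      have "cnj (W s a) * Gm a b (th s) * W s b = (\<Sum>k<N. \<Sum>l<N. X s k a l b)" for a b
      proof -
        have "cnj (W s a) * Gm a b (th s) * W s b
           = (\<Sum>k<N. \<Sum>l<N. (cis (th s * real k) * cnj (V k a)) * Gm a b (th s) * (cis (- (th s * real l)) * V l b))"
          unfolding cw[of a] W_def[of s b] by (rule prod3)
        also have "\<dots> = (\<Sum>k<N. \<Sum>l<N. X s k a l b)"
        proof (intro sum.cong refl)
          fix k l
          have "cis (th s * real k) * cis (- (th s * real l)) = cis (th s * (real k - real l))"
            by (simp add: cis_mult right_diff_distrib)
          then show "(cis (th s * real k) * cnj (V k a)) * Gm a b (th s) * (cis (- (th s * real l)) * V l b) = X s k a l b"
            unfolding X_def by (metis (no_types, lifting) mult.assoc mult.commute mult.left_commute)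
        qed
        finally show ?thesis .
      qed
      then show ?thesis unfolding qf_def by simp
    qed
    then show ?thesis by simp
  qed
  finally have eq: "qf (N*q) (\<lambda>i j. g (i mod q) (j mod q) (int (j div q) - int (i div q))) v
      = of_real (1 / real M) * (\<Sum>s<M. qf q (\<lambda>a b. Gm a b (th s)) (W s))" by simp
  have "cnonneg (\<Sum>s<M. qf q (\<lambda>a b. Gm a b (th s)) (W s))"
    using G unfolding psd_qf Gm_def by (intro cnonneg_sum) blast
  then show "cnonneg (qf (N*q) (\<lambda>i j. g (i mod q) (j mod q) (int (j div q) - int (i div q))) v)"
    unfolding eq by (rule cnonneg_scale) simp
qed


lemma pair_nonneg:
  fixes N q n :: nat and Q :: "nat \<Rightarrow> nat \<Rightarrow> complex" and \<rho> :: "nat \<Rightarrow> nat \<Rightarrow> int \<Rightarrow> complex"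
  assumes q0: "q > 0"
    and Qpsd: "psd (N*q) Q"
    and band: "\<And>i j. i < N*q \<Longrightarrow> j < N*q \<Longrightarrow> Q i j \<noteq> 0 \<Longrightarrow> \<bar>int (i div q) - int (j div q)\<bar> < int n"
    and R: "psd (n*q) (\<lambda>i j. \<rho> (i mod q) (j mod q) (int (i div q) - int (j div q)))"
  shows "cnonneg (\<Sum>i<N*q. \<Sum>j<N*q. Q i j * \<rho> (i mod q) (j mod q) (int (i div q) - int (j div q)))"
proof -
  define B where "B i j = (\<bar>int (i div q) - int (j div q)\<bar> < int n)" for i j
  have Bsym: "\<And>i j. B i j \<Longrightarrow> B j i" by (auto simp: B_def)
  have Bclos: "\<And>c i j. c \<le> i \<Longrightarrow> c \<le> j \<Longrightarrow> B c i \<Longrightarrow> B c j \<Longrightarrow> B i j"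
  proof -
    fix c i j :: nat assume "c \<le> i" "c \<le> j" "B c i" "B c j"
    moreover have "c div q \<le> i div q" "c div q \<le> j div q" using \<open>c \<le> i\<close> \<open>c \<le> j\<close> by (auto intro: div_le_mono)
    ultimately show "B i j" by (auto simp: B_def)
  qed
  have band': "\<forall>i j. i < N*q \<longrightarrow> j < N*q \<longrightarrow> Q i j \<noteq> 0 \<longrightarrow> B i j" using band by (auto simp: B_def)
  obtain x where x1: "\<forall>i<N*q. \<forall>j<N*q. Q i j = (\<Sum>c\<in>{0..<N*q}. x c i * cnj (x c j))"
    and x2: "\<forall>c i. x c i \<noteq> 0 \<longrightarrow> c \<le> i \<and> i < N*q \<and> B c i"
  proof -
    have "\<exists>x. (\<forall>i<N*q. \<forall>j<N*q. Q i j = (\<Sum>c\<in>{0..<N*q}. x c i * cnj (x c j)))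
          \<and> (\<forall>c i. x c i \<noteq> 0 \<longrightarrow> c \<le> i \<and> i < N*q \<and> B c i)"
      apply (rule chol_step[where B=B and P="N*q" and M=Q and s=0])
      using Bsym apply blast
      using Bclos apply blast
      using Qpsd apply blast
      using band' apply blast
       apply simp
      apply simp
      done
    then show ?thesis using that by blast
  qed
  define r where "r i j = \<rho> (i mod q) (j mod q) (int (i div q) - int (j div q))" for i j
  have "(\<Sum>i<N*q. \<Sum>j<N*q. Q i j * r i j) = (\<Sum>i<N*q. \<Sum>j<N*q. \<Sum>c<N*q. x c i * cnj (x c j) * r i j)"
    using x1 by (simp add: sum_distrib_right atLeast0LessThan)
  also have "\<dots> = (\<Sum>i<N*q. \<Sum>c<N*q. \<Sum>j<N*q. x c i * cnj (x c j) * r i j)"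
    by (rule sum.cong[OF refl]) (rule sum.swap)
  also have "\<dots> = (\<Sum>c<N*q. \<Sum>i<N*q. \<Sum>j<N*q. x c i * cnj (x c j) * r i j)"
    by (rule sum.swap)
  finally have eq: "(\<Sum>i<N*q. \<Sum>j<N*q. Q i j * r i j) = (\<Sum>c<N*q. \<Sum>i<N*q. \<Sum>j<N*q. x c i * cnj (x c j) * r i j)" .
  have "cnonneg (\<Sum>i<N*q. \<Sum>j<N*q. x c i * cnj (x c j) * r i j)" for c
  proof -
    define K where "K = c div q"
    have supp: "K*q \<le> i \<and> i < K*q + n*q \<and> i < N*q" if "x c i \<noteq> 0" for i
    proof -
      have h: "c \<le> i" "i < N*q" "B c i" using x2 that by auto
      have "K \<le> i div q" unfolding K_def using h(1) by (rule div_le_mono)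
      moreover have "i div q < K + n" using h(3) \<open>K \<le> i div q\<close> unfolding B_def K_def by linarith
      have "K * q \<le> i div q * q" using \<open>K \<le> i div q\<close> by (rule mult_le_mono1)
      moreover have "i div q * q \<le> i" by (metis div_mult_mod_eq le_add1)
      ultimately have "K * q \<le> i" by linarith
      moreover have "i < (K + n) * q" using div_less_iff_less_mult[OF q0] \<open>i div q < K + n\<close> by simp
      ultimately have "K * q \<le> i" "i < (K + n) * q" by auto
      then show ?thesis using h(2) by (simp add: algebra_simps)
    qed
    have inner: "(\<Sum>j<N*q. x c i * cnj (x c j) * r i j) = (\<Sum>j<n*q. x c i * cnj (x c (K*q + j)) * r i (K*q + j))" for i
      by (rule sum_window) (use supp in auto)
    have "(\<Sum>i<N*q. \<Sum>j<N*q. x c i * cnj (x c j) * r i j) = (\<Sum>i<N*q. \<Sum>j<n*q. x c i * cnj (x c (K*q + j)) * r i (K*q + j))"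
      by (simp only: inner)
    also have "\<dots> = (\<Sum>i<n*q. \<Sum>j<n*q. x c (K*q+i) * cnj (x c (K*q + j)) * r (K*q+i) (K*q + j))"
    proof (rule sum_window)
      fix i assume "(\<Sum>j<n*q. x c i * cnj (x c (K*q + j)) * r i (K*q + j)) \<noteq> 0"
      then have "x c i \<noteq> 0" by (cases "x c i = 0") simp_all
      then show "K*q \<le> i \<and> i < K*q + n*q \<and> i < N*q" using supp by blast
    qed
    also have "\<dots> = qf (n*q) (\<lambda>i j. \<rho> (i mod q) (j mod q) (int (i div q) - int (j div q))) (\<lambda>i. cnj (x c (K*q+i)))"
      unfolding qf_def
    proof (intro sum.cong refl)
      fix i j
      have "r (K*q+i) (K*q + j) = \<rho> (i mod q) (j mod q) (int (i div q) - int (j div q))"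
        using q0 by (simp add: r_def)
      then show "x c (K*q+i) * cnj (x c (K*q + j)) * r (K*q+i) (K*q + j) =
          cnj (cnj (x c (K*q+i))) * \<rho> (i mod q) (j mod q) (int (i div q) - int (j div q)) * cnj (x c (K*q+j))"
        by simp
    qed
    finally show ?thesis using R by (simp add: psd_qf)
  qed
  then show ?thesis unfolding r_def[symmetric] eq by (rule cnonneg_sum)
qed

lemma diag_count:
  fixes \<phi> :: "int \<Rightarrow> complex"
  assumes supp: "\<And>m. \<phi> m \<noteq> 0 \<Longrightarrow> m \<in> Iset n" and nN: "n \<le> N"
  shows "(\<Sum>k<Suc N. \<Sum>l<Suc N. \<phi> (int l - int k)) = (\<Sum>k<N. \<Sum>l<N. \<phi> (int l - int k)) + (\<Sum>m\<in>Iset n. \<phi> m)"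
proof -
  have e1: "(\<Sum>k<Suc N. \<Sum>l<Suc N. \<phi> (int l - int k)) = (\<Sum>k<N. \<Sum>l<Suc N. \<phi> (int l - int k)) + (\<Sum>l<Suc N. \<phi> (int l - int N))"
    by simp
  have e2: "(\<Sum>k<N. \<Sum>l<Suc N. \<phi> (int l - int k)) = (\<Sum>k<N. \<Sum>l<N. \<phi> (int l - int k)) + (\<Sum>k<N. \<phi> (int N - int k))"
    by (simp add: sum.distrib)
  have e3: "(\<Sum>l<Suc N. \<phi> (int l - int N)) = (\<Sum>m\<in>{- int N..0}. \<phi> m)"
    by (rule sum.reindex_bij_witness[where i = "\<lambda>m. nat (m + int N)" and j = "\<lambda>l. int l - int N"]) auto
  have e4: "(\<Sum>k<N. \<phi> (int N - int k)) = (\<Sum>m\<in>{1..int N}. \<phi> m)"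
    by (rule sum.reindex_bij_witness[where i = "\<lambda>m. nat (int N - m)" and j = "\<lambda>k. int N - int k"]) auto
  have e5: "(\<Sum>m\<in>{1..int N}. \<phi> m) + (\<Sum>m\<in>{- int N..0}. \<phi> m) = (\<Sum>m\<in>{- int N..int N}. \<phi> m)"
  proof -
    have "{- int N..int N} = {1..int N} \<union> {- int N..0}" by auto
    then show ?thesis by (simp add: sum.union_disjoint)
  qed
  have supp': "\<phi> m = 0" if "m \<notin> Iset n" for m using supp that by blast
  have e6: "(\<Sum>m\<in>{- int N..int N}. \<phi> m) = (\<Sum>m\<in>Iset n. \<phi> m)"
    by (rule sum.mono_neutral_right) (use supp' nN in \<open>auto simp: Iset_def\<close>)
  show ?thesis unfolding e1 e2 e3 e4 using e5 e6 by (simp add: add.assoc)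
qed


lemma core:
  fixes g \<rho> :: "nat \<Rightarrow> nat \<Rightarrow> int \<Rightarrow> complex" and n q :: nat
  assumes G: "\<And>t. psd q (\<lambda>a b. \<Sum>m\<in>Iset n. g a b m * cis (of_int m * t))"
    and R: "block_psd q n (\<lambda>a b k l. \<rho> a b (int k - int l))"
  shows "cnonneg (\<Sum>a<q. \<Sum>b<q. \<Sum>m\<in>Iset n. g a b m * \<rho> a b (- m))"
proof (cases "q = 0")
  case True then show ?thesis by (simp add: cnonneg_def)
next
  case False
  then have q0: "q > 0" by simp
  define g' where "g' a b m = (if m \<in> Iset n then g a b m else 0)" for a b m
  have geq: "(\<Sum>m\<in>Iset n. g' a b m * c m) = (\<Sum>m\<in>Iset n. g a b m * c m)" for a b and c :: "int \<Rightarrow> complex"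
    by (intro sum.cong refl) (simp add: g'_def)
  have G': "psd q (\<lambda>a b. \<Sum>m\<in>Iset n. g' a b m * cis (of_int m * t))" for t
    using G[of t] by (simp only: geq)
  have gz: "g' a b m = 0" if "m \<notin> Iset n" for a b m using that by (simp add: g'_def)
  define \<phi> where "\<phi> m = (\<Sum>a<q. \<Sum>b<q. g' a b m * \<rho> a b (- m))" for m
  have supp: "m \<in> Iset n" if "\<phi> m \<noteq> 0" for m
  proof (rule ccontr)
    assume "m \<notin> Iset n"
    then have "\<phi> m = 0" using gz by (simp add: \<phi>_def)
    then show False using that by simp
  qed
  define A where "A N = (\<Sum>k<N. \<Sum>l<N. \<phi> (int l - int k))" for N
  have Apos: "cnonneg (A N)" for N
  proof -
    let ?Q = "\<lambda>i j. g' (i mod q) (j mod q) (int (j div q) - int (i div q))"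
    have Qpsd: "psd (N*q) ?Q" by (rule toep_psd[OF G' gz])
    have band: "\<bar>int (i div q) - int (j div q)\<bar> < int n" if "?Q i j \<noteq> 0" for i j
    proof -
      have "int (j div q) - int (i div q) \<in> Iset n" using that gz by blast
      then show ?thesis by (simp add: mem_Iset abs_minus_commute)
    qed
    have Rf: "psd (n*q) (\<lambda>i j. \<rho> (i mod q) (j mod q) (int (i div q) - int (j div q)))"
      by (rule block_to_flat[OF R])
    have c: "cnonneg (\<Sum>i<N*q. \<Sum>j<N*q. ?Q i j * \<rho> (i mod q) (j mod q) (int (i div q) - int (j div q)))"
      by (rule pair_nonneg[OF q0 Qpsd band Rf])
    have "(\<Sum>i<N*q. \<Sum>j<N*q. ?Q i j * \<rho> (i mod q) (j mod q) (int (i div q) - int (j div q)))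
        = (\<Sum>k<N. \<Sum>a<q. \<Sum>l<N. \<Sum>b<q. g' a b (int l - int k) * \<rho> a b (int k - int l))"
      by (rule sum2_flat)
    also have "\<dots> = (\<Sum>k<N. \<Sum>l<N. \<Sum>a<q. \<Sum>b<q. g' a b (int l - int k) * \<rho> a b (int k - int l))"
      by (rule sum.cong[OF refl]) (rule sum.swap)
    also have "\<dots> = A N"
      unfolding A_def \<phi>_def by (intro sum.cong refl) simp
    finally show ?thesis using c by simp
  qed
  define S where "S = (\<Sum>m\<in>Iset n. \<phi> m)"
  have Astep: "A (n + j) = A n + of_nat j * S" for j
  proof (induction j)
    case 0 then show ?case by simp
  next
    case (Suc j)
    have "A (Suc (n + j)) = A (n + j) + S"
      unfolding A_def S_def by (rule diag_count) (use supp in auto)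
    then show ?case using Suc by (simp add: algebra_simps)
  qed
  have Seq: "S = (\<Sum>a<q. \<Sum>b<q. \<Sum>m\<in>Iset n. g a b m * \<rho> a b (- m))"
  proof -
    have "(\<Sum>a<q. \<Sum>b<q. \<Sum>m\<in>Iset n. g a b m * \<rho> a b (- m)) = (\<Sum>a<q. \<Sum>b<q. \<Sum>m\<in>Iset n. g' a b m * \<rho> a b (- m))"
      by (simp only: geq)
    also have "\<dots> = (\<Sum>a<q. \<Sum>m\<in>Iset n. \<Sum>b<q. g' a b m * \<rho> a b (- m))"
      by (rule sum.cong[OF refl]) (rule sum.swap)
    also have "\<dots> = (\<Sum>m\<in>Iset n. \<Sum>a<q. \<Sum>b<q. g' a b m * \<rho> a b (- m))"
      by (rule sum.swap)
    finally show ?thesis unfolding S_def \<phi>_def by simp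
  qed
  have h: "cnonneg (A n + of_nat j * S)" for j using Apos[of "n + j"] Astep[of j] by simp
  have "Im (A n) = 0" using h[of 0] by (simp add: cnonneg_def)
  then have imS: "Im S = 0" using h[of 1] by (simp add: cnonneg_def)
  have reS: "Re S \<ge> 0"
  proof (rule ccontr)
    assume "\<not> Re S \<ge> 0"
    then have neg: "Re S < 0" by simp
    obtain j :: nat where j: "Re (A n) / (- Re S) < real j" using reals_Archimedean2 by blast
    have "Re (A n) < real j * (- Re S)" using j neg by (simp add: field_simps)
    moreover have "0 \<le> Re (A n) + real j * Re S" using h[of j] by (simp add: cnonneg_def)
    ultimately show False by simp
  qed
  show ?thesis using imS reS Seq by (simp add: cnonneg_def)
qed


lemma cis_sphere [simp]: "cis t \<in> sphere (0::complex) 1"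
  by simp

lemma sphere_cis:
  assumes "z \<in> sphere (0::complex) 1"
  shows "\<exists>t\<in>{0..2*pi}. z = cis t"
proof -
  have "norm z = 1" using assms by simp
  then have "exp (\<i> * of_real (Arg2pi z)) = z" by (simp add: complex_norm_eq_1_exp)
  then have "z = cis (Arg2pi z)" by (simp add: cis_conv_exp)
  moreover have "Arg2pi z \<in> {0..2*pi}" using Arg2pi[of z] by auto
  ultimately show ?thesis by blast
qed

lemma cont_cis_comp:
  assumes "continuous_on (sphere 0 1) f"
  shows "continuous_on {0..2*pi} (\<lambda>t. f (cis t))"
proof -
  have "continuous_on {0..2*pi} cis" by (intro continuous_intros)
  then show ?thesis by (rule continuous_on_compose2[OF assms]) auto
qed

lemma integ_fc:
  assumes "continuous_on (sphere 0 1) f"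
  shows "(\<lambda>t. f (cis t) * cis (- (of_int k * t))) integrable_on {0..2*pi}"
  by (intro integrable_continuous_real continuous_intros cont_cis_comp assms)

lemma int_cis:
  "((\<lambda>t. cis (of_int j * t)) has_integral (if j = 0 then of_real (2*pi) else 0)) {0..2*pi}"
proof (cases "j = 0")
  case True
  show ?thesis using True has_integral_const_real[of "1::complex" 0 "2*pi"] by (simp add: scaleR_conv_of_real)
next
  case False
  have cont: "continuous_on {0..2*pi} (\<lambda>t. cis (of_int j * t))" by (intro continuous_intros)
  have e: "cis (of_int j * t) = exp ((\<i> * of_int j) * complex_of_real t)" for t
    by (simp add: cis_conv_exp mult_ac)
  have a0: "\<i> * of_int j \<noteq> (0::complex)" using False by simp
  have "integral {0..2*pi} (\<lambda>t. cis (of_int j * t)) = integral {0..2*pi} (\<lambda>t. exp ((\<i> * of_int j) * complex_of_real t))"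
    by (simp only: e)
  also have "\<dots> = (exp ((\<i> * of_int j) * of_real (2*pi)) - 1) / (\<i> * of_int j)"
    by (rule Kronecker_Approximation_Theorem.integral_exp) (use a0 in auto)
  also have "exp ((\<i> * of_int j) * of_real (2*pi)) = cis (2 * pi * of_int j)"
    by (simp add: cis_conv_exp mult_ac)
  also have "\<dots> = 1" by simp
  finally have "integral {0..2*pi} (\<lambda>t. cis (of_int j * t)) = 0" by simp
  then show ?thesis using False integrable_continuous_real[OF cont] by (simp add: has_integral_integrable_integral)
qed

definition tp :: "(int \<Rightarrow> complex) \<Rightarrow> nat \<Rightarrow> complex \<Rightarrow> complex" where
  "tp c n z = (if z \<in> sphere 0 1 then (\<Sum>m\<in>Iset n. c m * z powi m) else 0)"

lemma tp_cis: "tp c n (cis t) = (\<Sum>m\<in>Iset n. c m * cis (of_int m * t))"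
  by (simp add: tp_def cis_power_int)

lemma tp_cont: "continuous_on (sphere 0 1) (tp c n)"
proof -
  have "continuous_on (sphere 0 1) (\<lambda>z::complex. \<Sum>m\<in>Iset n. c m * z powi m)"
    by (intro continuous_intros) auto
  then show ?thesis by (rule continuous_on_cong[THEN iffD1, rotated 2]) (auto simp: tp_def)
qed

lemma fourier_tp: "fourier_coeff (tp c n) k = (if k \<in> Iset n then c k else 0)"
proof -
  have e: "tp c n (cis t) * cis (- (of_int k * t)) = (\<Sum>m\<in>Iset n. c m * cis (of_int (m - k) * t))" for t
    unfolding tp_cis sum_distrib_right
    by (intro sum.cong refl) (simp add: mult.assoc cis_mult algebra_simps)
  have "((\<lambda>t. \<Sum>m\<in>Iset n. c m * cis (of_int (m - k) * t)) has_integral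
          (\<Sum>m\<in>Iset n. c m * (if m - k = 0 then of_real (2*pi) else 0))) {0..2*pi}"
    by (intro has_integral_sum finite_Iset has_integral_mult_right int_cis)
  also have "(\<Sum>m\<in>Iset n. c m * (if m - k = 0 then of_real (2*pi) else 0)) = (if k \<in> Iset n then c k * of_real (2*pi) else 0)"
    by (simp add: if_distrib sum.delta cong: if_cong)
  finally have "integral {0..2*pi} (\<lambda>t. tp c n (cis t) * cis (- (of_int k * t))) = (if k \<in> Iset n then c k * of_real (2*pi) else 0)"
    unfolding e by (rule integral_unique)
  then show ?thesis unfolding fourier_coeff_def by simp
qed

lemma tp_low: "tp c n \<in> CS1_low n"
  unfolding CS1_low_def
  using tp_cont by (auto simp: fourier_tp mem_Iset tp_def)


definition Tl :: "(complex \<times> int) list \<Rightarrow> complex \<Rightarrow> complex" where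
  "Tl xs z = sum_list (map (\<lambda>(c,k). c * z powi k) xs)"

definition prodl :: "(complex \<times> int) list \<Rightarrow> (complex \<times> int) list \<Rightarrow> (complex \<times> int) list" where
  "prodl xs ys = concat (map (\<lambda>(c1,k1). map (\<lambda>(c2,k2). (c1*c2, k1+k2)) ys) xs)"

lemma Tl_Nil [simp]: "Tl [] z = 0" by (simp add: Tl_def)
lemma Tl_Cons [simp]: "Tl ((c,k) # xs) z = c * z powi k + Tl xs z" by (simp add: Tl_def)
lemma Tl_append: "Tl (xs @ ys) z = Tl xs z + Tl ys z" by (simp add: Tl_def)

lemma Tl_scale: "Tl (map (\<lambda>(c,k). (a*c, k)) xs) z = a * Tl xs z"
  by (induction xs) (auto simp: algebra_simps)

lemma Tl_prod:
  assumes "z \<noteq> 0"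
  shows "Tl (prodl xs ys) z = Tl xs z * Tl ys z"
proof -
  have 1: "Tl (map (\<lambda>(c2,k2). (c1*c2, k1+k2)) ys) z = c1 * z powi k1 * Tl ys z" for c1 k1
    by (induction ys) (auto simp: algebra_simps power_int_add assms)
  show ?thesis unfolding prodl_def
    by (induction xs) (auto simp: Tl_append 1 distrib_right)
qed

lemma Tl_cont: "continuous_on (sphere 0 1) (Tl xs)"
proof (induction xs)
  case Nil then show ?case by (simp add: Tl_def)
next
  case (Cons x xs)
  obtain c k where x: "x = (c,k)" by force
  have "continuous_on (sphere 0 1) (\<lambda>z::complex. c * z powi k + Tl xs z)"
    by (intro continuous_intros Cons.IH) auto
  then show ?case by (simp add: x)
qed

lemma Tl_cis: "Tl xs (cis t) = sum_list (map (\<lambda>(c,k). c * cis (of_int k * t)) xs)"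
  by (simp add: Tl_def cis_power_int)

lemma inverse_unit:
  assumes "norm (z::complex) = 1" shows "inverse z = cnj z"
proof -
  have "z * cnj z = 1" using complex_norm_square[of z] assms by simp
  then show ?thesis by (rule inverse_unique)
qed


definition Ptrig :: "(complex \<Rightarrow> real) \<Rightarrow> bool" where
  "Ptrig h \<longleftrightarrow> (\<exists>xs. \<forall>z\<in>sphere 0 1. complex_of_real (h z) = Tl xs z)"

lemma Ptrig_cont:
  assumes "Ptrig h" shows "continuous_on (sphere 0 1) h"
proof -
  obtain xs where xs: "\<forall>z\<in>sphere 0 1. complex_of_real (h z) = Tl xs z" using assms Ptrig_def by blast
  have eq: "h z = Re (Tl xs z)" if "z \<in> sphere 0 1" for z
  proof -
    have "Re (complex_of_real (h z)) = Re (Tl xs z)" using xs that by simp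
    then show ?thesis by simp
  qed
  have c: "continuous_on (sphere 0 1) (\<lambda>z. Re (Tl xs z))" by (intro continuous_intros Tl_cont)
  have "continuous_on (sphere 0 1) h = continuous_on (sphere 0 1) (\<lambda>z. Re (Tl xs z))"
    by (rule continuous_on_cong) (auto simp: eq)
  then show ?thesis using c by simp
qed

lemma PRe: "Ptrig (\<lambda>z. Re z)"
  unfolding Ptrig_def
proof (intro exI[of _ "[(1/2, 1), (1/2, -1)]"] ballI)
  fix z :: complex assume "z \<in> sphere 0 1"
  then have iz: "inverse z = cnj z" by (simp add: inverse_unit)
  have "Tl [(1/2, 1), (1/2, -1)] z = (z + cnj z) / 2"
    by (simp add: power_int_minus iz add_divide_distrib)
  also have "\<dots> = complex_of_real (Re z)" by (simp add: complex_add_cnj)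
  finally show "complex_of_real (Re z) = Tl [(1/2, 1), (1/2, -1)] z" by simp
qed

lemma PIm: "Ptrig (\<lambda>z. Im z)"
  unfolding Ptrig_def
proof (intro exI[of _ "[(- \<i>/2, 1), (\<i>/2, -1)]"] ballI)
  fix z :: complex assume "z \<in> sphere 0 1"
  then have iz: "inverse z = cnj z" by (simp add: inverse_unit)
  have "Tl [(- \<i>/2, 1), (\<i>/2, -1)] z = - \<i> * (z - cnj z) / 2"
    by (simp add: power_int_minus iz algebra_simps diff_divide_distrib add_divide_distrib)
  also have "\<dots> = complex_of_real (Im z)" by (simp add: complex_diff_cnj complex_eq_iff)
  finally show "complex_of_real (Im z) = Tl [(- \<i>/2, 1), (\<i>/2, -1)] z" by simp
qed


lemma Ptrig_approx:
  assumes "continuous_on (sphere 0 1) f" "e > 0"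
  shows "\<exists>h. Ptrig h \<and> (\<forall>z\<in>sphere 0 1. \<bar>f z - h z\<bar> < e)"
proof (rule Stone_Weierstrass_HOL[where P = Ptrig])
  show "compact (sphere (0::complex) 1)" by simp
  show "Ptrig (\<lambda>x. c)" for c
    unfolding Ptrig_def by (intro exI[of _ "[(of_real c, 0)]"]) simp
  show "continuous_on (sphere 0 1) h" if "Ptrig h" for h using that by (rule Ptrig_cont)
  show "Ptrig (\<lambda>x. f1 x + g1 x)" if "Ptrig f1 \<and> Ptrig g1" for f1 g1
  proof -
    from that obtain xs where a: "\<forall>z\<in>sphere 0 1. complex_of_real (f1 z) = Tl xs z" unfolding Ptrig_def by blast
    from that obtain ys where b: "\<forall>z\<in>sphere 0 1. complex_of_real (g1 z) = Tl ys z" unfolding Ptrig_def by blast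
    from a b show ?thesis unfolding Ptrig_def by (intro exI[of _ "xs @ ys"]) (simp add: Tl_append)
  qed
  show "Ptrig (\<lambda>x. f1 x * g1 x)" if "Ptrig f1 \<and> Ptrig g1" for f1 g1
  proof -
    from that obtain xs where a: "\<forall>z\<in>sphere 0 1. complex_of_real (f1 z) = Tl xs z" unfolding Ptrig_def by blast
    from that obtain ys where b: "\<forall>z\<in>sphere 0 1. complex_of_real (g1 z) = Tl ys z" unfolding Ptrig_def by blast
    have "complex_of_real (f1 z * g1 z) = Tl (prodl xs ys) z" if "z \<in> sphere 0 1" for z
    proof -
      have "z \<noteq> 0" using that by auto
      then show ?thesis using a b that by (simp add: Tl_prod)
    qed
    then show ?thesis unfolding Ptrig_def by blast
  qed
  show "\<exists>h. Ptrig h \<and> h x \<noteq> h y" if "x \<in> sphere 0 1 \<and> y \<in> sphere 0 1 \<and> x \<noteq> y" for x y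
  proof (cases "Re x = Re y")
    case True
    then have "Im x \<noteq> Im y" using that by (auto simp: complex_eq_iff)
    then show ?thesis using PIm by blast
  next
    case False
    then show ?thesis using PRe by blast
  qed
  show "continuous_on (sphere 0 1) f" by (rule assms(1))
  show "0 < e" by (rule assms(2))
qed


lemma fourier_unique:
  assumes gc: "continuous_on (sphere 0 1) g" and gz: "\<And>k. fourier_coeff g k = 0"
    and z: "z \<in> sphere 0 1"
  shows "g z = 0"
proof -
  define u where "u t = g (cis t)" for t
  have uc: "continuous_on {0..2*pi} u" using cont_cis_comp[OF gc] by (simp add: u_def)
  have i1: "((\<lambda>t. u t * cis (of_int k * t)) has_integral 0) {0..2*pi}" for k
  proof -
    have int: "(\<lambda>t. g (cis t) * cis (- (of_int (-k) * t))) integrable_on {0..2*pi}" by (rule integ_fc[OF gc])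
    have "integral {0..2*pi} (\<lambda>t. g (cis t) * cis (- (of_int (-k) * t))) = 0"
      using gz[of "-k"] by (simp add: fourier_coeff_def)
    then show ?thesis using int by (simp add: u_def has_integral_integrable_integral)
  qed
  have i2: "((\<lambda>t. u t * Tl xs (cis t)) has_integral 0) {0..2*pi}" for xs
  proof (induction xs)
    case Nil then show ?case by simp
  next
    case (Cons x xs)
    obtain c k where x: "x = (c,k)" by force
    have "((\<lambda>t. c * (u t * cis (of_int k * t)) + u t * Tl xs (cis t)) has_integral (c * 0 + 0)) {0..2*pi}"
      by (intro has_integral_add has_integral_mult_right i1 Cons.IH)
    moreover have "(\<lambda>t. c * (u t * cis (of_int k * t)) + u t * Tl xs (cis t)) = (\<lambda>t. u t * Tl (x # xs) (cis t))"
      by (rule ext) (simp add: x cis_power_int algebra_simps)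
    ultimately show ?case by simp
  qed
  obtain B where B: "B > 0" "\<And>t. norm (u t) \<le> B"
  proof -
    have "compact (g ` sphere 0 1)" by (intro compact_continuous_image gc compact_sphere)
    then obtain B where "B > 0" "\<forall>x\<in>g ` sphere 0 1. norm x \<le> B"
      using compact_imp_bounded bounded_pos by blast
    then show ?thesis using that by (auto simp: u_def)
  qed
  have uuint: "(\<lambda>t. u t * cnj (u t)) integrable_on {0..2*pi}"
    by (intro integrable_continuous_real continuous_intros uc)
  have small: "norm (integral {0..2*pi} (\<lambda>t. u t * cnj (u t))) \<le> B * (2 * e) * (2 * pi)" if e: "e > 0" for e
  proof -
    have cRe: "continuous_on (sphere 0 1) (\<lambda>z. Re (g z))" by (intro continuous_intros gc)
    have cIm: "continuous_on (sphere 0 1) (\<lambda>z. Im (g z))" by (intro continuous_intros gc)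
    obtain hu where hu: "Ptrig hu" "\<forall>z\<in>sphere 0 1. \<bar>Re (g z) - hu z\<bar> < e"
      using Ptrig_approx[OF cRe e] by blast
    obtain hv where hv: "Ptrig hv" "\<forall>z\<in>sphere 0 1. \<bar>Im (g z) - hv z\<bar> < e"
      using Ptrig_approx[OF cIm e] by blast
    from hu(1) obtain xsu where xsu: "\<forall>z\<in>sphere 0 1. complex_of_real (hu z) = Tl xsu z" unfolding Ptrig_def by blast
    from hv(1) obtain xsv where xsv: "\<forall>z\<in>sphere 0 1. complex_of_real (hv z) = Tl xsv z" unfolding Ptrig_def by blast
    define xs where "xs = xsu @ map (\<lambda>(c,k). (- \<i> * c, k)) xsv"
    have H: "Tl xs z = of_real (hu z) - \<i> * of_real (hv z)" if "z \<in> sphere 0 1" for z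
      using Tl_scale[of "- \<i>" xsv z] xsu xsv that by (simp add: xs_def Tl_append)
    have approx: "norm (cnj (u t) - Tl xs (cis t)) \<le> 2 * e" for t
    proof -
      define a where "a = Re (g (cis t)) - hu (cis t)"
      define b where "b = Im (g (cis t)) - hv (cis t)"
      have "cnj (u t) - Tl xs (cis t) = complex_of_real a - \<i> * complex_of_real b"
        unfolding H[OF cis_sphere] by (simp add: u_def a_def b_def complex_eq_iff)
      also have "norm \<dots> \<le> norm (complex_of_real a) + norm (\<i> * complex_of_real b)"
        by (rule norm_triangle_ineq4)
      also have "\<dots> = \<bar>a\<bar> + \<bar>b\<bar>" by (simp add: norm_mult)
      also have "\<dots> \<le> 2 * e"
      proof -
        have "\<bar>a\<bar> < e" unfolding a_def using hu(2) cis_sphere[of t] by blast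
        moreover have "\<bar>b\<bar> < e" unfolding b_def using hv(2) cis_sphere[of t] by blast
        ultimately show ?thesis by linarith
      qed
      finally show ?thesis .
    qed
    have uHint: "(\<lambda>t. u t * Tl xs (cis t)) integrable_on {0..2*pi}" using i2 by blast
    have dint: "(\<lambda>t. u t * cnj (u t) - u t * Tl xs (cis t)) integrable_on {0..2*pi}"
      by (rule integrable_diff[OF uuint uHint])
    have "integral {0..2*pi} (\<lambda>t. u t * cnj (u t) - u t * Tl xs (cis t))
        = integral {0..2*pi} (\<lambda>t. u t * cnj (u t)) - integral {0..2*pi} (\<lambda>t. u t * Tl xs (cis t))"
      by (rule integral_diff[OF uuint uHint])
    also have "integral {0..2*pi} (\<lambda>t. u t * Tl xs (cis t)) = 0" using i2 by (rule integral_unique)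
    finally have eq: "integral {0..2*pi} (\<lambda>t. u t * cnj (u t)) = integral {0..2*pi} (\<lambda>t. u t * cnj (u t) - u t * Tl xs (cis t))"
      by simp
    have bnd: "norm (u t * cnj (u t) - u t * Tl xs (cis t)) \<le> B * (2 * e)" for t
    proof -
      have "norm (u t * cnj (u t) - u t * Tl xs (cis t)) = norm (u t) * norm (cnj (u t) - Tl xs (cis t))"
        by (simp add: norm_mult[symmetric] right_diff_distrib)
      also have "\<dots> \<le> B * (2 * e)" using B approx[of t] e
        by (intro mult_mono) auto
      finally show ?thesis .
    qed
    have "norm (integral {0..2*pi} (\<lambda>t. u t * cnj (u t) - u t * Tl xs (cis t))) \<le> B * (2 * e) * (2*pi)"
      using integrable_bound[of "B * (2 * e)" "\<lambda>t. u t * cnj (u t) - u t * Tl xs (cis t)" 0 "2*pi"] B e dint bnd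
      by simp
    then show ?thesis unfolding eq by simp
  qed
  have zero: "integral {0..2*pi} (\<lambda>t. u t * cnj (u t)) = 0"
  proof (rule ccontr)
    let ?I = "integral {0..2*pi} (\<lambda>t. u t * cnj (u t))"
    assume "?I \<noteq> 0"
    then have np: "norm ?I > 0" by simp
    define e where "e = norm ?I / (8 * pi * B)"
    have "e > 0" using np B by (simp add: e_def)
    then have "norm ?I \<le> B * (2 * e) * (2 * pi)" by (rule small)
    also have "\<dots> = norm ?I / 2" using B by (simp add: e_def field_simps)
    finally show False using np by simp
  qed
  define f where "f t = (cmod (u t))^2" for t
  have fc: "continuous_on {0..2*pi} f" unfolding f_def by (intro continuous_intros uc)
  obtain I where I: "(f has_integral I) {0..2*pi}" using integrable_continuous_real[OF fc] by blast
  have hI: "((\<lambda>t. complex_of_real (f t)) has_integral of_real I) {0..2*pi}" by (rule has_integral_of_real[OF I])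
  have eqf: "(\<lambda>t. complex_of_real (f t)) = (\<lambda>t. u t * cnj (u t))"
    by (rule ext) (simp only: f_def complex_norm_square)
  have "((\<lambda>t. u t * cnj (u t)) has_integral of_real I) {0..2*pi}" using hI unfolding eqf .
  then have "integral {0..2*pi} (\<lambda>t. u t * cnj (u t)) = of_real I" by (rule integral_unique)
  then have "complex_of_real I = 0" using zero by simp
  then have "I = 0" by simp
  then have "integral {0..2*pi} f = 0" using I by (simp add: integral_unique)
  then have "\<forall>t\<in>{0..2*pi}. f t = 0"
  proof -
    have "\<And>x. x \<in> {0..2*pi} \<Longrightarrow> f x \<ge> 0" by (simp add: f_def)
    then show ?thesis using integral_eq_0_iff[of 0 "2*pi" f] fc \<open>integral {0..2*pi} f = 0\<close> by simp
  qed
  moreover obtain t where t: "t \<in> {0..2*pi}" "z = cis t" using sphere_cis[OF z] by blast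
  ultimately show ?thesis by (simp add: f_def u_def)
qed


lemma fourier_add:
  assumes "continuous_on (sphere 0 1) f" "continuous_on (sphere 0 1) g"
  shows "fourier_coeff (\<lambda>z. f z + g z) k = fourier_coeff f k + fourier_coeff g k"
proof -
  have "integral {0..2*pi} (\<lambda>t. (f (cis t) + g (cis t)) * cis (- (of_int k * t)))
      = integral {0..2*pi} (\<lambda>t. f (cis t) * cis (- (of_int k * t)) + g (cis t) * cis (- (of_int k * t)))"
    by (simp add: distrib_right)
  also have "\<dots> = integral {0..2*pi} (\<lambda>t. f (cis t) * cis (- (of_int k * t))) + integral {0..2*pi} (\<lambda>t. g (cis t) * cis (- (of_int k * t)))"
    by (rule integral_add[OF integ_fc[OF assms(1)] integ_fc[OF assms(2)]])
  finally show ?thesis unfolding fourier_coeff_def by (simp add: add_divide_distrib)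
qed

lemma fourier_diff:
  assumes "continuous_on (sphere 0 1) f" "continuous_on (sphere 0 1) g"
  shows "fourier_coeff (\<lambda>z. f z - g z) k = fourier_coeff f k - fourier_coeff g k"
proof -
  have "integral {0..2*pi} (\<lambda>t. (f (cis t) - g (cis t)) * cis (- (of_int k * t)))
      = integral {0..2*pi} (\<lambda>t. f (cis t) * cis (- (of_int k * t)) - g (cis t) * cis (- (of_int k * t)))"
    by (simp add: left_diff_distrib)
  also have "\<dots> = integral {0..2*pi} (\<lambda>t. f (cis t) * cis (- (of_int k * t))) - integral {0..2*pi} (\<lambda>t. g (cis t) * cis (- (of_int k * t)))"
    by (rule integral_diff[OF integ_fc[OF assms(1)] integ_fc[OF assms(2)]])
  finally show ?thesis unfolding fourier_coeff_def by (simp add: diff_divide_distrib)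
qed

lemma fourier_scale:
  assumes "continuous_on (sphere 0 1) f"
  shows "fourier_coeff (\<lambda>z. c * f z) k = c * fourier_coeff f k"
proof -
  have "((\<lambda>t. f (cis t) * cis (- (of_int k * t))) has_integral integral {0..2*pi} (\<lambda>t. f (cis t) * cis (- (of_int k * t)))) {0..2*pi}"
    using integ_fc[OF assms] by (rule integrable_integral)
  then have "((\<lambda>t. c * (f (cis t) * cis (- (of_int k * t)))) has_integral c * integral {0..2*pi} (\<lambda>t. f (cis t) * cis (- (of_int k * t)))) {0..2*pi}"
    by (rule has_integral_mult_right)
  then have "integral {0..2*pi} (\<lambda>t. c * f (cis t) * cis (- (of_int k * t))) = c * integral {0..2*pi} (\<lambda>t. f (cis t) * cis (- (of_int k * t)))"
    by (simp add: integral_unique mult.assoc)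
  then show ?thesis unfolding fourier_coeff_def by simp
qed

lemma CS1_repr:
  assumes f: "f \<in> CS1_low n"
  shows "f = tp (fourier_coeff f) n"
proof (rule ext)
  fix z
  have fc: "continuous_on (sphere 0 1) f" and f0: "\<And>z. z \<notin> sphere 0 1 \<Longrightarrow> f z = 0"
    and fk: "\<And>k. \<bar>k\<bar> \<ge> int n \<Longrightarrow> fourier_coeff f k = 0"
    using f by (auto simp: CS1_low_def)
  show "f z = tp (fourier_coeff f) n z"
  proof (cases "z \<in> sphere 0 1")
    case False then show ?thesis using f0 by (simp add: tp_def)
  next
    case True
    let ?h = "\<lambda>z. f z - tp (fourier_coeff f) n z"
    have hc: "continuous_on (sphere 0 1) ?h" by (intro continuous_intros fc tp_cont)
    have hk: "fourier_coeff ?h k = 0" for k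
      unfolding fourier_diff[OF fc tp_cont] fourier_tp using fk by (auto simp: mem_Iset)
    have "?h z = 0" by (rule fourier_unique[OF hc hk True])
    then show ?thesis by simp
  qed
qed

lemma CS1_cont: "f \<in> CS1_low n \<Longrightarrow> continuous_on (sphere 0 1) f"
  by (simp add: CS1_low_def)

lemma CS1_cis: "f \<in> CS1_low n \<Longrightarrow> f (cis t) = (\<Sum>m\<in>Iset n. fourier_coeff f m * cis (of_int m * t))"
  by (subst CS1_repr, assumption) (simp add: tp_cis)


definition tau :: "(nat \<Rightarrow> nat \<Rightarrow> complex) \<Rightarrow> int \<Rightarrow> complex" where
  "tau T m = (if 0 \<le> m then T (nat m) 0 else T 0 (nat (- m)))"

definition Phi :: "nat \<Rightarrow> (complex \<Rightarrow> complex) \<Rightarrow> (nat \<Rightarrow> nat \<Rightarrow> complex) \<Rightarrow> complex" where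
  "Phi n f T = (if T \<in> toeplitz n then (\<Sum>m\<in>Iset n. fourier_coeff f m * tau T (- m)) else 0)"

definition Bm :: "nat \<Rightarrow> int \<Rightarrow> nat \<Rightarrow> nat \<Rightarrow> complex" where
  "Bm n j = (\<lambda>k l. if k < n \<and> l < n \<and> int k - int l = j then 1 else 0)"

lemma toeplitz_tau:
  assumes "T \<in> toeplitz n"
  shows "T k l = (if k < n \<and> l < n then tau T (int k - int l) else 0)"
proof -
  obtain \<tau> where t: "\<And>k l. T k l = (if k < n \<and> l < n then \<tau> (int k - int l) else 0)"
    using assms unfolding toeplitz_def by blast
  show ?thesis
  proof (cases "k < n \<and> l < n")
    case True
    then show ?thesis by (auto simp: t tau_def)
  next
    case False then show ?thesis by (auto simp: t)
  qed
qed

lemma toeplitz_add: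
  assumes "x \<in> toeplitz n" "y \<in> toeplitz n" shows "(\<lambda>k l. x k l + y k l) \<in> toeplitz n"
proof -
  obtain \<tau> where t: "\<forall>k l. x k l = (if k < n \<and> l < n then \<tau> (int k - int l) else 0)"
    using assms(1) unfolding toeplitz_def by blast
  obtain \<sigma> where s: "\<forall>k l. y k l = (if k < n \<and> l < n then \<sigma> (int k - int l) else 0)"
    using assms(2) unfolding toeplitz_def by blast
  show ?thesis unfolding toeplitz_def mem_Collect_eq
    by (rule exI[of _ "\<lambda>m. \<tau> m + \<sigma> m"]) (simp add: t s)
qed

lemma toeplitz_scale:
  assumes "x \<in> toeplitz n" shows "(\<lambda>k l. c * x k l) \<in> toeplitz n"
proof -
  obtain \<tau> where t: "\<forall>k l. x k l = (if k < n \<and> l < n then \<tau> (int k - int l) else 0)"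
    using assms(1) unfolding toeplitz_def by blast
  show ?thesis unfolding toeplitz_def mem_Collect_eq
    by (rule exI[of _ "\<lambda>m. c * \<tau> m"]) (simp add: t)
qed

lemma toeplitz_zero: "(\<lambda>k l. 0) \<in> toeplitz n"
  unfolding toeplitz_def mem_Collect_eq by (rule exI[of _ "\<lambda>m. 0"]) simp

lemma Bm_toeplitz: "Bm n j \<in> toeplitz n"
  unfolding toeplitz_def Bm_def mem_Collect_eq by (rule exI[of _ "\<lambda>m. if m = j then 1 else 0"]) auto

lemma tau_Bm: "m \<in> Iset n \<Longrightarrow> tau (Bm n j) m = (if m = j then 1 else 0)"
  by (auto simp: tau_def Bm_def mem_Iset)

lemma tau_add: "tau (\<lambda>k l. x k l + y k l) m = tau x m + tau y m" by (simp add: tau_def)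
lemma tau_scale: "tau (\<lambda>k l. c * x k l) m = c * tau x m" by (simp add: tau_def)

lemma Iset_uminus: "m \<in> Iset n \<Longrightarrow> - m \<in> Iset n" by (auto simp: mem_Iset)

lemma toeplitz_expand:
  assumes "T \<in> toeplitz n"
  shows "T = (\<lambda>k l. \<Sum>j\<in>Iset n. tau T j * Bm n j k l)"
proof (intro ext)
  fix k l
  show "T k l = (\<Sum>j\<in>Iset n. tau T j * Bm n j k l)"
  proof (cases "k < n \<and> l < n")
    case True
    then have "int k - int l \<in> Iset n" by (auto simp: mem_Iset)
    then show ?thesis using True toeplitz_tau[OF assms, of k l]
      by (simp add: Bm_def if_distrib sum.delta' cong: if_cong)
  next
    case False
    then have "\<And>j. Bm n j k l = 0" by (auto simp: Bm_def)
    then show ?thesis using toeplitz_tau[OF assms, of k l] False by simp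
  qed
qed

lemma dual_add: "\<phi> \<in> toeplitz_dual n \<Longrightarrow> x \<in> toeplitz n \<Longrightarrow> y \<in> toeplitz n \<Longrightarrow> \<phi> (\<lambda>k l. x k l + y k l) = \<phi> x + \<phi> y"
  by (simp add: toeplitz_dual_def)

lemma dual_scale: "\<phi> \<in> toeplitz_dual n \<Longrightarrow> x \<in> toeplitz n \<Longrightarrow> \<phi> (\<lambda>k l. c * x k l) = c * \<phi> x"
  by (simp add: toeplitz_dual_def)

lemma dual_sum:
  assumes phi: "\<phi> \<in> toeplitz_dual n" and fin: "finite J" and X: "\<And>j. j \<in> J \<Longrightarrow> X j \<in> toeplitz n"
  shows "\<phi> (\<lambda>k l. \<Sum>j\<in>J. c j * X j k l) = (\<Sum>j\<in>J. c j * \<phi> (X j))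
         \<and> (\<lambda>k l. \<Sum>j\<in>J. c j * X j k l) \<in> toeplitz n"
  using fin X
proof (induction J rule: finite_induct)
  case empty
  have z: "(\<lambda>k l. 0::complex) \<in> toeplitz n" by (rule toeplitz_zero)
  have "\<forall>c. \<forall>x\<in>toeplitz n. \<phi> (\<lambda>k l. c * x k l) = c * \<phi> x" using phi by (simp add: toeplitz_dual_def)
  then have "\<forall>x\<in>toeplitz n. \<phi> (\<lambda>k l. 0 * x k l) = 0 * \<phi> x" by (rule spec)
  then have "\<phi> (\<lambda>k l. 0 * (\<lambda>k l. 0::complex) k l) = 0 * \<phi> (\<lambda>k l. 0)"
    by (rule bspec[OF _ z])
  then show ?case using z by simp
next
  case (insert x F)
  have IH: "\<phi> (\<lambda>k l. \<Sum>j\<in>F. c j * X j k l) = (\<Sum>j\<in>F. c j * \<phi> (X j))"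
    "(\<lambda>k l. \<Sum>j\<in>F. c j * X j k l) \<in> toeplitz n" using insert by auto
  have Xx: "X x \<in> toeplitz n" using insert by auto
  have sc: "(\<lambda>k l. c x * X x k l) \<in> toeplitz n" by (rule toeplitz_scale[OF Xx])
  have e: "(\<lambda>k l. \<Sum>j\<in>insert x F. c j * X j k l) = (\<lambda>k l. c x * X x k l + (\<Sum>j\<in>F. c j * X j k l))"
    using insert by simp
  have "\<phi> (\<lambda>k l. c x * X x k l + (\<Sum>j\<in>F. c j * X j k l)) = \<phi> (\<lambda>k l. c x * X x k l) + \<phi> (\<lambda>k l. \<Sum>j\<in>F. c j * X j k l)"
    by (rule dual_add[OF phi sc IH(2)])
  moreover have "\<phi> (\<lambda>k l. c x * X x k l) = c x * \<phi> (X x)"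
    by (rule dual_scale[OF phi Xx])
  ultimately show ?case unfolding e using insert IH toeplitz_add[OF sc IH(2)] by simp
qed


lemma Phi_dual: "Phi n f \<in> toeplitz_dual n"
  unfolding toeplitz_dual_def
proof (intro CollectI conjI ballI allI impI)
  fix x y assume x: "x \<in> toeplitz n" and y: "y \<in> toeplitz n"
  show "Phi n f (\<lambda>k l. x k l + y k l) = Phi n f x + Phi n f y"
    using x y toeplitz_add[OF x y] by (simp add: Phi_def tau_add distrib_left sum.distrib)
next
  fix c x assume x: "x \<in> toeplitz n"
  show "Phi n f (\<lambda>k l. c * x k l) = c * Phi n f x"
    using x toeplitz_scale[OF x] by (simp add: Phi_def tau_scale sum_distrib_left mult_ac)
next
  fix x assume "x \<notin> toeplitz n"
  then show "Phi n f x = 0" by (simp add: Phi_def)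
qed

lemma Phi_coeff:
  assumes m: "m \<in> Iset n"
  shows "Phi n f (Bm n (- m)) = fourier_coeff f m"
proof -
  have "Phi n f (Bm n (- m)) = (\<Sum>m'\<in>Iset n. fourier_coeff f m' * tau (Bm n (- m)) (- m'))"
    by (simp add: Phi_def Bm_toeplitz)
  also have "\<dots> = (\<Sum>m'\<in>Iset n. if m' = m then fourier_coeff f m' else 0)"
    by (intro sum.cong refl) (simp add: tau_Bm Iset_uminus)
  also have "\<dots> = fourier_coeff f m" using m by (simp add: sum.delta')
  finally show ?thesis .
qed

lemma Phi_inj: "inj_on (Phi n) (CS1_low n)"
proof (rule inj_onI)
  fix f g assume f: "f \<in> CS1_low n" and g: "g \<in> CS1_low n" and e: "Phi n f = Phi n g"
  have "fourier_coeff f m = fourier_coeff g m" if "m \<in> Iset n" for m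
    using Phi_coeff[OF that, of f] Phi_coeff[OF that, of g] e by simp
  then have "tp (fourier_coeff f) n = tp (fourier_coeff g) n"
    unfolding tp_def by (intro ext) (auto intro!: sum.cong)
  then show "f = g" using CS1_repr[OF f] CS1_repr[OF g] by simp
qed

lemma Phi_surj: "Phi n ` CS1_low n = toeplitz_dual n"
proof
  show "Phi n ` CS1_low n \<subseteq> toeplitz_dual n" using Phi_dual by blast
next
  show "toeplitz_dual n \<subseteq> Phi n ` CS1_low n"
  proof
    fix \<phi> assume phi: "\<phi> \<in> toeplitz_dual n"
    define c where "c m = \<phi> (Bm n (- m))" for m
    have "Phi n (tp c n) = \<phi>"
    proof (rule ext)
      fix T
      show "Phi n (tp c n) T = \<phi> T"
      proof (cases "T \<in> toeplitz n")
        case False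
        then show ?thesis using phi by (simp add: Phi_def toeplitz_dual_def)
      next
        case True
        have "Phi n (tp c n) T = (\<Sum>m\<in>Iset n. c m * tau T (- m))"
          using True by (simp add: Phi_def fourier_tp)
        also have "\<dots> = (\<Sum>j\<in>Iset n. tau T j * \<phi> (Bm n j))"
          by (rule sum.reindex_bij_witness[where i = uminus and j = uminus]) (auto simp: Iset_uminus c_def)
        also have "\<dots> = \<phi> (\<lambda>k l. \<Sum>j\<in>Iset n. tau T j * Bm n j k l)"
          using dual_sum[where \<phi>=\<phi> and J="Iset n" and X="Bm n" and c="tau T"] phi Bm_toeplitz by simp
        also have "(\<lambda>k l. \<Sum>j\<in>Iset n. tau T j * Bm n j k l) = T"
          using toeplitz_expand[OF True] by simp
        finally show ?thesis .
      qed
    qed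
    moreover have "tp c n \<in> CS1_low n" by (rule tp_low)
    ultimately show "\<phi> \<in> Phi n ` CS1_low n" by blast
  qed
qed

lemma Phi_add:
  assumes "f \<in> CS1_low n" "g \<in> CS1_low n"
  shows "Phi n (\<lambda>z. f z + g z) = (\<lambda>x. Phi n f x + Phi n g x)"
  using fourier_add[OF CS1_cont[OF assms(1)] CS1_cont[OF assms(2)]]
  by (intro ext) (simp add: Phi_def distrib_right sum.distrib)

lemma Phi_scale:
  assumes "f \<in> CS1_low n"
  shows "Phi n (\<lambda>z. c * f z) = (\<lambda>x. c * Phi n f x)"
  using fourier_scale[OF CS1_cont[OF assms]]
  by (intro ext) (simp add: Phi_def sum_distrib_left mult_ac)

lemma Phi_unit:
  assumes n: "n \<ge> 1"
  shows "Phi n CS1_unit = toeplitz_dual_unit n"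
proof -
  have z: "0 \<in> Iset n" using n by (simp add: mem_Iset)
  have s: "(\<Sum>m\<in>Iset n. (if m = 0 then 1 else 0) * w powi m) = 1" for w :: complex
  proof -
    have "(\<Sum>m\<in>Iset n. (if m = 0 then 1 else 0) * w powi m) = (\<Sum>m\<in>Iset n. if m = 0 then 1 else 0)"
      by (intro sum.cong) auto
    then show ?thesis using z by simp
  qed
  have u: "CS1_unit = tp (\<lambda>m. if m = 0 then 1 else 0) n"
    by (intro ext) (simp add: CS1_unit_def tp_def s)
  show ?thesis
  proof (rule ext)
    fix T
    have fcu: "fourier_coeff CS1_unit m = (if m = 0 then 1 else 0)" if "m \<in> Iset n" for m
      using that by (simp add: u fourier_tp)
    have "(\<Sum>m\<in>Iset n. fourier_coeff CS1_unit m * tau T (- m)) = (\<Sum>m\<in>Iset n. if m = 0 then tau T 0 else 0)"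
      by (intro sum.cong refl) (simp add: fcu)
    also have "\<dots> = T 0 0" using z by (simp add: tau_def)
    finally show "Phi n CS1_unit T = toeplitz_dual_unit n T"
      by (simp add: Phi_def toeplitz_dual_unit_def)
  qed
qed


lemma sum3_swap: "(\<Sum>m\<in>M. \<Sum>i\<in>I. \<Sum>j\<in>J. f m i j) = (\<Sum>i\<in>I. \<Sum>j\<in>J. \<Sum>m\<in>M. f m i j)"
proof -
  have "(\<Sum>m\<in>M. \<Sum>i\<in>I. \<Sum>j\<in>J. f m i j) = (\<Sum>i\<in>I. \<Sum>m\<in>M. \<Sum>j\<in>J. f m i j)" by (rule sum.swap)
  also have "\<dots> = (\<Sum>i\<in>I. \<Sum>j\<in>J. \<Sum>m\<in>M. f m i j)" by (rule sum.cong[OF refl]) (rule sum.swap)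
  finally show ?thesis .
qed

lemma swap22: "(\<Sum>i\<in>I. \<Sum>j\<in>J. \<Sum>a\<in>A. \<Sum>b\<in>B. f i j a b) = (\<Sum>a\<in>A. \<Sum>b\<in>B. \<Sum>i\<in>I. \<Sum>j\<in>J. f i j a b)"
proof -
  have "(\<Sum>i\<in>I. \<Sum>j\<in>J. \<Sum>a\<in>A. \<Sum>b\<in>B. f i j a b) = (\<Sum>i\<in>I. \<Sum>a\<in>A. \<Sum>j\<in>J. \<Sum>b\<in>B. f i j a b)"
    by (rule sum.cong[OF refl]) (rule sum.swap)
  also have "\<dots> = (\<Sum>a\<in>A. \<Sum>i\<in>I. \<Sum>j\<in>J. \<Sum>b\<in>B. f i j a b)" by (rule sum.swap)
  also have "\<dots> = (\<Sum>a\<in>A. \<Sum>i\<in>I. \<Sum>b\<in>B. \<Sum>j\<in>J. f i j a b)"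
    by (intro sum.cong[OF refl]) (rule sum.swap)
  also have "\<dots> = (\<Sum>a\<in>A. \<Sum>b\<in>B. \<Sum>i\<in>I. \<Sum>j\<in>J. f i j a b)"
    by (rule sum.cong[OF refl]) (rule sum.swap)
  finally show ?thesis .
qed

lemma pos_forward:
  assumes F: "\<forall>i<p. \<forall>j<p. F i j \<in> CS1_low n" and pos: "CS1_low_pos p F"
  shows "toeplitz_dual_pos n p (\<lambda>i j. Phi n (F i j))"
  unfolding toeplitz_dual_pos_def
proof (intro allI impI)
  fix q R assume Rt: "\<forall>a<q. \<forall>b<q. R a b \<in> toeplitz n" and Rp: "toeplitz_pos n q R"
  show "block_psd q p (\<lambda>a b i j. Phi n (F i j) (R a b))"
    unfolding block_psd_def
  proof
    fix v :: "nat \<Rightarrow> nat \<Rightarrow> complex"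
    define g where "g a b m = (\<Sum>i<p. \<Sum>j<p. cnj (v a i) * fourier_coeff (F i j) m * v b j)" for a b m
    define \<rho> where "\<rho> a b m = tau (R a b) m" for a b m
    have G: "psd q (\<lambda>a b. \<Sum>m\<in>Iset n. g a b m * cis (of_int m * t))" for t
    proof (unfold psd_qf, intro allI)
      fix w :: "nat \<Rightarrow> complex"
      define y where "y i = (\<Sum>a<q. w a * v a i)" for i
      have inner: "(\<Sum>m\<in>Iset n. g a b m * cis (of_int m * t)) = (\<Sum>i<p. \<Sum>j<p. cnj (v a i) * F i j (cis t) * v b j)" for a b
      proof -
        have "(\<Sum>m\<in>Iset n. g a b m * cis (of_int m * t))
            = (\<Sum>m\<in>Iset n. \<Sum>i<p. \<Sum>j<p. cnj (v a i) * fourier_coeff (F i j) m * v b j * cis (of_int m * t))"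
          unfolding g_def by (simp add: sum_distrib_right)
        also have "\<dots> = (\<Sum>i<p. \<Sum>j<p. \<Sum>m\<in>Iset n. cnj (v a i) * fourier_coeff (F i j) m * v b j * cis (of_int m * t))"
          by (rule sum3_swap)
        also have "\<dots> = (\<Sum>i<p. \<Sum>j<p. cnj (v a i) * F i j (cis t) * v b j)"
        proof (intro sum.cong refl)
          fix i j assume "i \<in> {..<p}" "j \<in> {..<p}"
          then have "F i j \<in> CS1_low n" using F by auto
          then show "(\<Sum>m\<in>Iset n. cnj (v a i) * fourier_coeff (F i j) m * v b j * cis (of_int m * t)) = cnj (v a i) * F i j (cis t) * v b j"
            by (simp add: CS1_cis sum_distrib_left sum_distrib_right mult_ac)
        qed
        finally show ?thesis .
      qed
      have "qf q (\<lambda>a b. \<Sum>m\<in>Iset n. g a b m * cis (of_int m * t)) w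
          = (\<Sum>a<q. \<Sum>b<q. \<Sum>i<p. \<Sum>j<p. cnj (w a) * cnj (v a i) * F i j (cis t) * (w b * v b j))"
        unfolding qf_def inner by (simp add: sum_distrib_left sum_distrib_right mult_ac)
      also have "\<dots> = (\<Sum>i<p. \<Sum>j<p. \<Sum>a<q. \<Sum>b<q. cnj (w a) * cnj (v a i) * F i j (cis t) * (w b * v b j))"
        by (rule swap22[symmetric])
      also have "\<dots> = qf p (\<lambda>i j. F i j (cis t)) y"
        unfolding qf_def
      proof (intro sum.cong refl)
        fix i j
        have cy: "cnj (y i) = (\<Sum>a<q. cnj (w a) * cnj (v a i))" by (simp add: y_def)
        show "(\<Sum>a<q. \<Sum>b<q. cnj (w a) * cnj (v a i) * F i j (cis t) * (w b * v b j)) = cnj (y i) * F i j (cis t) * y j"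
        proof -
          have yj: "y j = (\<Sum>b<q. w b * v b j)" by (simp add: y_def)
          show ?thesis unfolding cy yj by (rule prod3[symmetric])
        qed
      qed
      finally show "cnonneg (qf q (\<lambda>a b. \<Sum>m\<in>Iset n. g a b m * cis (of_int m * t)) w)"
        using pos cis_sphere[of t] unfolding CS1_low_pos_def psd_qf by metis
    qed
    have R': "block_psd q n (\<lambda>a b k l. \<rho> a b (int k - int l))"
    proof -
      have "block_psd q n R" using Rp by (simp add: toeplitz_pos_def)
      moreover have "(\<Sum>i<q. \<Sum>j<q. \<Sum>k<n. \<Sum>l<n. cnj (u i k) * R i j k l * u j l)
          = (\<Sum>i<q. \<Sum>j<q. \<Sum>k<n. \<Sum>l<n. cnj (u i k) * \<rho> i j (int k - int l) * u j l)" for u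
        by (intro sum.cong refl) (simp add: \<rho>_def toeplitz_tau[of "R _ _" n] Rt)
      ultimately show ?thesis unfolding block_psd_def by simp
    qed
    have c: "cnonneg (\<Sum>a<q. \<Sum>b<q. \<Sum>m\<in>Iset n. g a b m * \<rho> a b (- m))" by (rule core[OF G R'])
    have "(\<Sum>a<q. \<Sum>b<q. \<Sum>i<p. \<Sum>j<p. cnj (v a i) * Phi n (F i j) (R a b) * v b j)
        = (\<Sum>a<q. \<Sum>b<q. \<Sum>m\<in>Iset n. g a b m * \<rho> a b (- m))"
    proof (intro sum.cong refl)
      fix a b assume "a \<in> {..<q}" "b \<in> {..<q}"
      then have Rab: "R a b \<in> toeplitz n" using Rt by auto
      have "(\<Sum>i<p. \<Sum>j<p. cnj (v a i) * Phi n (F i j) (R a b) * v b j)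
          = (\<Sum>i<p. \<Sum>j<p. \<Sum>m\<in>Iset n. cnj (v a i) * fourier_coeff (F i j) m * v b j * \<rho> a b (- m))"
        using Rab by (simp add: Phi_def \<rho>_def sum_distrib_left sum_distrib_right mult_ac)
      also have "\<dots> = (\<Sum>m\<in>Iset n. \<Sum>i<p. \<Sum>j<p. cnj (v a i) * fourier_coeff (F i j) m * v b j * \<rho> a b (- m))"
        by (rule sum3_swap[symmetric])
      also have "\<dots> = (\<Sum>m\<in>Iset n. g a b m * \<rho> a b (- m))"
        unfolding g_def by (simp add: sum_distrib_right)
      finally show "(\<Sum>i<p. \<Sum>j<p. cnj (v a i) * Phi n (F i j) (R a b) * v b j) = (\<Sum>m\<in>Iset n. g a b m * \<rho> a b (- m))" .
    qed
    then show "cnonneg (\<Sum>a<q. \<Sum>b<q. \<Sum>i<p. \<Sum>j<p. cnj (v a i) * Phi n (F i j) (R a b) * v b j)"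
      using c by simp
  qed
qed


lemma tau_W:
  assumes "m \<in> Iset n"
  shows "tau (\<lambda>k l. if k < n \<and> l < n then cis (- (of_int (int k - int l) * t)) else 0) (- m) = cis (of_int m * t)"
  using assms by (auto simp: tau_def mem_Iset)

lemma pos_backward:
  assumes F: "\<forall>i<p. \<forall>j<p. F i j \<in> CS1_low n" and n: "n \<ge> 1"
    and dp: "toeplitz_dual_pos n p (\<lambda>i j. Phi n (F i j))"
  shows "CS1_low_pos p F"
  unfolding CS1_low_pos_def psd_def
proof (intro ballI allI)
  fix z :: complex and u :: "nat \<Rightarrow> complex" assume z: "z \<in> sphere 0 1"
  obtain t where t: "z = cis t" using sphere_cis[OF z] by blast
  define W where "W = (\<lambda>k l. if k < n \<and> l < n then cis (- (of_int (int k - int l) * t)) else 0)"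
  have Wt: "W \<in> toeplitz n"
    unfolding toeplitz_def mem_Collect_eq W_def by (rule exI[of _ "\<lambda>m. cis (- (of_int m * t))"]) simp
  have Wp: "toeplitz_pos n 1 (\<lambda>a b. W)"
    unfolding toeplitz_pos_def block_psd_def
  proof
    fix v :: "nat \<Rightarrow> nat \<Rightarrow> complex"
    define s where "s = (\<Sum>l<n. cis (of_nat l * t) * v 0 l)"
    have cs: "cnj s = (\<Sum>k<n. cis (- (of_nat k * t)) * cnj (v 0 k))" by (simp add: s_def cis_cnj)
    have "(\<Sum>i<1. \<Sum>j<1. \<Sum>k<n. \<Sum>l<n. cnj (v i k) * W k l * v j l) = (\<Sum>k<n. \<Sum>l<n. cnj (v 0 k) * W k l * v 0 l)"
      by simp
    also have "\<dots> = (\<Sum>k<n. \<Sum>l<n. cis (- (of_nat k * t)) * cnj (v 0 k) * 1 * (cis (of_nat l * t) * v 0 l))"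
    proof (intro sum.cong refl)
      fix k l assume "k \<in> {..<n}" "l \<in> {..<n}"
      moreover have "cis (- (of_nat k * t)) * cis (of_nat l * t) = cis (- (of_int (int k - int l) * t))"
        by (simp add: cis_mult algebra_simps)
      ultimately show "cnj (v 0 k) * W k l * v 0 l = cis (- (of_nat k * t)) * cnj (v 0 k) * 1 * (cis (of_nat l * t) * v 0 l)"
        by (simp add: W_def)
    qed
    also have "\<dots> = cnj s * 1 * s" by (subst cs, subst s_def, rule prod3[symmetric])
    finally show "cnonneg (\<Sum>i<1. \<Sum>j<1. \<Sum>k<n. \<Sum>l<n. cnj (v i k) * W k l * v j l)"
      by (simp add: cnonneg_normsq)
  qed
  have "block_psd 1 p (\<lambda>a b i j. Phi n (F i j) W)"
    using dp Wt Wp unfolding toeplitz_dual_pos_def by auto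
  then have c: "cnonneg (\<Sum>i<p. \<Sum>j<p. cnj (u i) * Phi n (F i j) W * u j)"
    unfolding block_psd_def by (auto dest: spec[of _ "\<lambda>a i. u i"])
  have "Phi n (F i j) W = F i j z" if "i < p" "j < p" for i j
  proof -
    have "Phi n (F i j) W = (\<Sum>m\<in>Iset n. fourier_coeff (F i j) m * cis (of_int m * t))"
      using Wt by (simp add: Phi_def W_def tau_W)
    also have "\<dots> = F i j z"
    proof -
      have "F i j \<in> CS1_low n" using F that by blast
      then show ?thesis unfolding t by (rule CS1_cis[symmetric])
    qed
    finally show ?thesis .
  qed
  then show "cnonneg (\<Sum>i<p. \<Sum>j<p. cnj (u i) * F i j z * u j)"
    using c by simp
qed


theorem corollary3p2:
  fixes n :: nat
  assumes "n \<ge> 1"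
  shows "\<exists>\<Phi> :: (complex \<Rightarrow> complex) \<Rightarrow> ((nat \<Rightarrow> nat \<Rightarrow> complex) \<Rightarrow> complex).
    bij_betw \<Phi> (CS1_low n) (toeplitz_dual n)
    \<and> (\<forall>f\<in>CS1_low n. \<forall>g\<in>CS1_low n. \<Phi> (\<lambda>z. f z + g z) = (\<lambda>x. \<Phi> f x + \<Phi> g x))
    \<and> (\<forall>c. \<forall>f\<in>CS1_low n. \<Phi> (\<lambda>z. c * f z) = (\<lambda>x. c * \<Phi> f x))
    \<and> \<Phi> CS1_unit = toeplitz_dual_unit n
    \<and> (\<forall>p F. (\<forall>i<p. \<forall>j<p. F i j \<in> CS1_low n) \<longrightarrow>
          (CS1_low_pos p F \<longleftrightarrow> toeplitz_dual_pos n p (\<lambda>i j. \<Phi> (F i j))))"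
proof (intro exI[of _ "Phi n"] conjI ballI allI impI)
  show "bij_betw (Phi n) (CS1_low n) (toeplitz_dual n)"
    unfolding bij_betw_def using Phi_inj Phi_surj by blast
  show "Phi n (\<lambda>z. f z + g z) = (\<lambda>x. Phi n f x + Phi n g x)" if "f \<in> CS1_low n" "g \<in> CS1_low n" for f g
    using Phi_add[OF that] .
  show "Phi n (\<lambda>z. c * f z) = (\<lambda>x. c * Phi n f x)" if "f \<in> CS1_low n" for c f
    using Phi_scale[OF that] .
  show "Phi n CS1_unit = toeplitz_dual_unit n" by (rule Phi_unit[OF assms])
  show "CS1_low_pos p F \<longleftrightarrow> toeplitz_dual_pos n p (\<lambda>i j. Phi n (F i j))"
    if "\<forall>i<p. \<forall>j<p. F i j \<in> CS1_low n" for p F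
    using pos_forward[OF that] pos_backward[OF that assms] by blast
qed


end
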